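(* Let $a,b,c,d,e\in\mathbb{R}$ and let $\alpha_i(t)$ ($i=1,\dots,5$) be arbitrary scalar continuous odd functions on $\mathbb{R}$. Consider the generalized Langford system $$\dot x=ax+by+xz,\quad \dot y=cx+dy+yz,\quad \dot z=ez-(x^2+y^2+z^2),\qquad (x,y,z)\in\mathbb{R}^3. \tag{L}$$ Then: (i) the Mironenko reflecting function of (L) coincides with that of the system $$\dot x=(ax+by+xz)(1+\alpha_1(t)),\quad \dot y=(cx+dy+yz)(1+\alpha_1(t)),\quad \dot z=\big(ez-(x^2+y^2+z^2)\big)(1+\alpha_1(t));$$ (ii) if $c=-b$, $d=a$, the Mironenko reflecting function of (L) coincides with that of the system $$\begin{aligned}\dot x&=(ax+by+xz)(1+\alpha_1(t))+x(a+z)\alpha_2(t)+y\alpha_3(t),\\ \dot y&=(-bx+ay+yz)(1+\alpha_1(t))+y(a+z)\alpha_2(t)-x\alpha_3(t),\\ \dot z&=(ez-x^2-y^2-z^2)(1+\alpha_1(t)+\alpha_2(t));\end{aligned}$$ (iii) if $c=-b$, $d=a$, $e=-2a$, the Mironenko reflecting function of (L) coincides with that of the system $$\begin{aligned}\dot x&=(ax+by+xz)(1+\alpha_1(t))+x(a+z)\alpha_2(t)+y\alpha_3(t)-y(x^2+y^2)(4az+x^2+y^2+2z^2)\alpha_4(t),\\ \dot y&=(-bx+ay+yz)(1+\alpha_1(t))+y(a+z)\alpha_2(t)-x\alpha_3(t)+x(x^2+y^2)(4az+x^2+y^2+2z^2)\alpha_4(t),\\ \dot z&=-(2az+x^2+y^2+z^2)(1+\alpha_1(t)+\alpha_2(t));\end{aligned}$$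 (iv) if $c=b=0$, $d=a$, $e=-2a$, the Mironenko reflecting function of (L) coincides with that of the system $$\begin{aligned}\dot x&=(ax+xz)(1+\alpha_1(t))+y\alpha_2(t)+y(4az+x^2+y^2+2z^2)\big(x^2\alpha_3(t)+xy\alpha_4(t)+y^2\alpha_5(t)\big),\\ \dot y&=(ay+yz)(1+\alpha_1(t))-x\alpha_2(t)-x(4az+x^2+y^2+2z^2)\big(x^2\alpha_3(t)+xy\alpha_4(t)+y^2\alpha_5(t)\big),\\ \dot z&=-(2az+x^2+y^2+z^2)(1+\alpha_1(t)).\end{aligned}$$
   Context: For a system $\dot x=X(t,x)$, $t\in\mathbb{R}$, $x\in D\subset\mathbb{R}^n$, with continuously differentiable right-hand side, let $x=\varphi(t;t_0,x_0)$ denote its general solution in Cauchy form (the solution with $\varphi(t_0;t_0,x_0)=x_0$). The Mironenko reflecting function (MRF) of the system is $F(t,x):=\varphi(-t;t,x)$, defined where this makes sense. *)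

theory Defs
  imports "HOL-Analysis.Analysis"
begin

type_synonym vf = "real \<Rightarrow> real \<times> real \<times> real \<Rightarrow> real \<times> real \<times> real"

definition is_solution_on :: "vf \<Rightarrow> real set \<Rightarrow> (real \<Rightarrow> real \<times> real \<times> real) \<Rightarrow> bool" where
  "is_solution_on X I u \<longleftrightarrow> is_interval I \<and>
     (\<forall>s\<in>I. (u has_vector_derivative X s (u s)) (at s within I))"

text \<open>Graph of the Mironenko reflecting function F(t,p) = phi(-t; t, p):
  F is defined at (t,p) with value q iff the solution through (t,p)
  exists on the segment between t and -t and takes the value q at -t.\<close>
definition mrf_graph :: "vf \<Rightarrow> real \<Rightarrow> real \<times> real \<times> real \<Rightarrow> real \<times> real \<times> real \<Rightarrow> bool" where
  "mrf_graph X t p q \<longleftrightarrow>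
     (\<exists>u. is_solution_on X (closed_segment (-t) t) u \<and> u t = p \<and> u (-t) = q)"

definition same_mrf :: "vf \<Rightarrow> vf \<Rightarrow> bool" where
  "same_mrf X Y \<longleftrightarrow> (\<forall>t p q r. mrf_graph X t p q \<and> mrf_graph Y t p r \<longrightarrow> q = r)"

definition odd_cont :: "(real \<Rightarrow> real) \<Rightarrow> bool" where
  "odd_cont f \<longleftrightarrow> continuous_on UNIV f \<and> (\<forall>t. f (-t) = - f t)"

definition langford :: "real \<Rightarrow> real \<Rightarrow> real \<Rightarrow> real \<Rightarrow> real \<Rightarrow> vf" where
  "langford a b c d e = (\<lambda>t (x, y, z).
     (a*x + b*y + x*z, c*x + d*y + y*z, e*z - (x^2 + y^2 + z^2)))"

end

theory Submission
  imports Defs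
begin

lemma gronwall0:
  fixes \<phi> :: "real \<Rightarrow> real"
  assumes cont: "continuous_on {a..b} \<phi>"
    and der: "\<And>x. a < x \<Longrightarrow> x < b \<Longrightarrow> \<exists>D. (\<phi> has_real_derivative D) (at x) \<and> \<bar>D\<bar> \<le> 2 * L * \<phi> x"
    and nn: "\<And>x. x \<in> {a..b} \<Longrightarrow> \<phi> x \<ge> 0"
    and s0: "s0 \<in> {a..b}" "\<phi> s0 = 0"
    and s: "s \<in> {a..b}"
  shows "\<phi> s = 0"
proof (cases "s0 \<le> s")
  case True
  define \<psi> where "\<psi> x = \<phi> x * exp (-2*L*x)" for x
  have "\<psi> s0 \<ge> \<psi> s"
  proof (rule DERIV_nonpos_imp_decreasing_open[OF True])
    fix x assume x: "s0 < x" "x < s"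
    then obtain D where D: "(\<phi> has_real_derivative D) (at x)" "\<bar>D\<bar> \<le> 2 * L * \<phi> x"
      using der[of x] s0 s by auto
    have "(\<psi> has_real_derivative (D * exp (-2*L*x) + \<phi> x * (exp (-2*L*x) * (-2*L)))) (at x)"
      unfolding \<psi>_def by (auto intro!: derivative_eq_intros D(1))
    moreover have "D * exp (-2*L*x) + \<phi> x * (exp (-2*L*x) * (-2*L)) \<le> 0"
    proof -
      have "D * exp (-2*L*x) + \<phi> x * (exp (-2*L*x) * (-2*L)) = (D - 2*L*\<phi> x) * exp (-2*L*x)"
        by (simp add: algebra_simps)
      also have "\<dots> \<le> 0" using D(2) by (intro mult_nonpos_nonneg) auto
      finally show ?thesis .
    qed
    ultimately show "\<exists>y. (\<psi> has_real_derivative y) (at x) \<and> y \<le> 0" by blast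
  next
    show "continuous_on {s0..s} \<psi>" unfolding \<psi>_def
      using s0 s by (intro continuous_intros continuous_on_subset[OF cont]) auto
  qed
  then have "\<phi> s * exp (- 2 * L * s) \<le> 0" using s0 by (simp add: \<psi>_def)
  then have "\<phi> s \<le> 0" by (simp add: mult_le_0_iff)
  then show ?thesis using nn[OF s] by simp
next
  case False
  define \<psi> where "\<psi> x = \<phi> x * exp (2*L*x)" for x
  have "\<psi> s \<le> \<psi> s0"
  proof (rule DERIV_nonneg_imp_increasing_open[of s s0])
    show "s \<le> s0" using False by simp
    fix x assume x: "s < x" "x < s0"
    then obtain D where D: "(\<phi> has_real_derivative D) (at x)" "\<bar>D\<bar> \<le> 2 * L * \<phi> x"
      using der[of x] s0 s by auto
    have "(\<psi> has_real_derivative (D * exp (2*L*x) + \<phi> x * (exp (2*L*x) * (2*L)))) (at x)"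
      unfolding \<psi>_def by (auto intro!: derivative_eq_intros D(1))
    moreover have "D * exp (2*L*x) + \<phi> x * (exp (2*L*x) * (2*L)) \<ge> 0"
    proof -
      have "D * exp (2*L*x) + \<phi> x * (exp (2*L*x) * (2*L)) = (D + 2*L*\<phi> x) * exp (2*L*x)"
        by (simp add: algebra_simps)
      also have "\<dots> \<ge> 0" using D(2) by (intro mult_nonneg_nonneg) auto
      finally show ?thesis .
    qed
    ultimately show "\<exists>y. (\<psi> has_real_derivative y) (at x) \<and> y \<ge> 0" by blast
  next
    show "continuous_on {s..s0} \<psi>" unfolding \<psi>_def
      using s0 s by (intro continuous_intros continuous_on_subset[OF cont]) auto
  qed
  then have "\<phi> s * exp (2 * L * s) \<le> 0" using s0 by (simp add: \<psi>_def)
  then have "\<phi> s \<le> 0" by (simp add: mult_le_0_iff)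
  then show ?thesis using nn[OF s] by simp
qed

definition sol :: "(real \<Rightarrow> 'a::real_normed_vector \<Rightarrow> 'a) \<Rightarrow> real set \<Rightarrow> (real \<Rightarrow> 'a) \<Rightarrow> bool" where
  "sol F I W \<longleftrightarrow> (\<forall>s\<in>I. (W has_vector_derivative F s (W s)) (at s within I))"

lemma hvd_union:
  assumes "(f has_vector_derivative D) (at x within S)" "(f has_vector_derivative D) (at x within T)"
  shows "(f has_vector_derivative D) (at x within S \<union> T)"
proof -
  have bl: "bounded_linear (\<lambda>h::real. h *\<^sub>R D)" by (rule bounded_linear_scaleR_left)
  let ?g = "\<lambda>y. (1 / norm (y - x)) *\<^sub>R (f y - (f x + (y - x) *\<^sub>R D))"
  have A: "(?g \<longlongrightarrow> 0) (at x within S)" and B: "(?g \<longlongrightarrow> 0) (at x within T)"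
    using assms unfolding has_vector_derivative_def has_derivative_within by blast+
  have "(?g \<longlongrightarrow> 0) (at x within S \<union> T)" unfolding at_within_union by (rule filterlim_sup[OF A B])
  then show ?thesis unfolding has_vector_derivative_def has_derivative_within using bl by blast
qed

lemma hvd_bot:
  assumes "\<not> x islimpt S"
  shows "(f has_vector_derivative D) (at x within S)"
proof -
  have "at x within S = bot" using assms trivial_limit_within by blast
  then show ?thesis unfolding has_vector_derivative_def has_derivative_within
    using bounded_linear_scaleR_left by simp
qed

lemma sol_glue:
  assumes ab: "a \<le> b" "b \<le> c" and s1: "sol F {a..b} W1" and s2: "sol F {b..c} W2" and eq: "W1 b = W2 b"
  shows "sol F {a..c} (\<lambda>s. if s \<le> b then W1 s else W2 s)"
  unfolding sol_def
proof
  fix s assume s: "s \<in> {a..c}"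
  let ?W = "\<lambda>s. if s \<le> b then W1 s else W2 s"
  have U: "{a..c} = {a..b} \<union> {b..c}" using ab by auto
  have A: "(?W has_vector_derivative F s (?W s)) (at s within {a..b})"
  proof (cases "s \<le> b")
    case True
    have "(W1 has_vector_derivative F s (W1 s)) (at s within {a..b})" using s1 s True unfolding sol_def by auto
    then have "(?W has_vector_derivative F s (W1 s)) (at s within {a..b})"
      by (rule has_vector_derivative_transform_within[where d=1 and f=W1]) (use True s in auto)
    then show ?thesis using True by auto
  next
    case False
    have "\<not> s islimpt {a..b}"
    proof
      assume "s islimpt {a..b}"
      then have "s \<in> {a..b}" using closed_atLeastAtMost closed_limpt by blast
      then show False using False by auto
    qed
    then show ?thesis by (rule hvd_bot)
  qed
  have B: "(?W has_vector_derivative F s (?W s)) (at s within {b..c})"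
  proof (cases "b \<le> s")
    case True
    have "(W2 has_vector_derivative F s (W2 s)) (at s within {b..c})" using s2 s True unfolding sol_def by auto
    then have "(?W has_vector_derivative F s (W2 s)) (at s within {b..c})"
      by (rule has_vector_derivative_transform_within[where d=1 and f=W2]) (use True s eq in auto)
    then show ?thesis using True eq by auto
  next
    case False
    have "\<not> s islimpt {b..c}"
    proof
      assume "s islimpt {b..c}"
      then have "s \<in> {b..c}" using closed_atLeastAtMost closed_limpt by blast
      then show False using False by auto
    qed
    then show ?thesis by (rule hvd_bot)
  qed
  show "(?W has_vector_derivative F s (?W s)) (at s within {a..c})"
    unfolding U by (rule hvd_union[OF A B])
qed

lemma sol_subset: "sol F I W \<Longrightarrow> J \<subseteq> I \<Longrightarrow> sol F J W"
  unfolding sol_def by (auto intro: has_vector_derivative_within_subset)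

lemma sol_cont:
  assumes "sol F I W" shows "continuous_on I W"
proof (rule has_derivative_continuous_on)
  fix s assume "s \<in> I"
  then show "(W has_derivative (\<lambda>h. h *\<^sub>R F s (W s))) (at s within I)"
    using assms unfolding sol_def has_vector_derivative_def by blast
qed

lemma uniq:
  fixes Wa Wb :: "real \<Rightarrow> 'a::real_inner"
  assumes Lip: "\<And>s x y. s \<in> {a..b} \<Longrightarrow> norm (F s x - F s y) \<le> L * norm (x - y)"
    and S1: "sol F {a..b} Wa" and S2: "sol F {a..b} Wb"
    and tz: "tz \<in> {a..b}" "Wa tz = Wb tz" and s: "s \<in> {a..b}"
  shows "Wa s = Wb s"
proof -
  define \<phi> where "\<phi> x = inner (Wa x - Wb x) (Wa x - Wb x)" for x
  have "\<phi> s = 0"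
  proof (rule gronwall0[of a b \<phi> L tz s])
    show "continuous_on {a..b} \<phi>" unfolding \<phi>_def
      using sol_cont[OF S1] sol_cont[OF S2] by (intro continuous_intros)
  next
    fix x assume x: "a < x" "x < b"
    then have xi: "x \<in> interior {a..b}" by auto
    have xab: "x \<in> {a..b}" using x by auto
    have d1: "(Wa has_vector_derivative F x (Wa x)) (at x)"
      using S1 xab at_within_interior[OF xi] unfolding sol_def by metis
    have d2: "(Wb has_vector_derivative F x (Wb x)) (at x)"
      using S2 xab at_within_interior[OF xi] unfolding sol_def by metis
    let ?d = "F x (Wa x) - F x (Wb x)"
    have "(\<phi> has_real_derivative (2 * inner (Wa x - Wb x) ?d)) (at x)"
    proof -
      have "((\<lambda>x. Wa x - Wb x) has_vector_derivative ?d) (at x)"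
        by (rule has_vector_derivative_diff[OF d1 d2])
      then have hd: "((\<lambda>x. Wa x - Wb x) has_derivative (\<lambda>h. h *\<^sub>R ?d)) (at x)"
        by (simp add: has_vector_derivative_def)
      have "((\<lambda>x. inner (Wa x - Wb x) (Wa x - Wb x)) has_derivative
          (\<lambda>h. inner (Wa x - Wb x) (h *\<^sub>R ?d) + inner (h *\<^sub>R ?d) (Wa x - Wb x))) (at x)"
        by (rule has_derivative_inner[OF hd hd])
      moreover have "(\<lambda>h. inner (Wa x - Wb x) (h *\<^sub>R ?d) + inner (h *\<^sub>R ?d) (Wa x - Wb x))
          = (*) (2 * inner (Wa x - Wb x) ?d)"
        by (auto simp: fun_eq_iff inner_commute algebra_simps)
      moreover have "\<phi> = (\<lambda>x. inner (Wa x - Wb x) (Wa x - Wb x))" by (simp add: fun_eq_iff \<phi>_def)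
      ultimately show ?thesis unfolding has_field_derivative_def by simp
    qed
    moreover have "\<bar>2 * inner (Wa x - Wb x) ?d\<bar> \<le> 2 * L * \<phi> x"
    proof -
      have "\<bar>inner (Wa x - Wb x) ?d\<bar> \<le> norm (Wa x - Wb x) * norm ?d" by (rule Cauchy_Schwarz_ineq2)
      also have "\<dots> \<le> norm (Wa x - Wb x) * (L * norm (Wa x - Wb x))"
        using Lip[of x "Wa x" "Wb x"] xab by (intro mult_left_mono) auto
      also have "\<dots> = L * \<phi> x" unfolding \<phi>_def power2_norm_eq_inner[symmetric] by (simp add: power2_eq_square)
      finally show ?thesis by simp
    qed
    ultimately show "\<exists>D. (\<phi> has_real_derivative D) (at x) \<and> \<bar>D\<bar> \<le> 2 * L * \<phi> x" by blast
  qed (use tz s in \<open>auto simp: \<phi>_def\<close>)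
  then show ?thesis by (simp add: \<phi>_def)
qed

lemma local_ex:
  fixes F :: "'a::banach \<Rightarrow> 'a"
  assumes Lip: "\<And>x y. norm (F x - F y) \<le> L * norm (x - y)" and L: "0 \<le> L"
    and h: "0 < h" "h * L \<le> 1/2"
  shows "\<exists>W. sol (\<lambda>s. F) {0..h} W \<and> W 0 = x0"
proof -
  define c where "c s = max 0 (min h s)" for s :: real
  have c01: "c s \<in> {0..h}" for s using h by (auto simp: c_def)
  have contc: "continuous_on UNIV c" unfolding c_def by (intro continuous_intros)
  have contF: "continuous_on UNIV F"
  proof -
    have "L-lipschitz_on UNIV F" unfolding lipschitz_on_def using L Lip by (auto simp: dist_norm)
    then show ?thesis by (rule lipschitz_on_continuous_on)
  qed
  define Pf where "Pf f = (\<lambda>s. x0 + integral {0..c s} (\<lambda>r. F (apply_bcontfun f r)))" for f :: "real \<Rightarrow>\<^sub>C 'a"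
  have cFf: "continuous_on A (\<lambda>r. F (apply_bcontfun f r))" for f :: "real \<Rightarrow>\<^sub>C 'a" and A
    by (rule continuous_on_compose2[OF contF]) auto
  have Pf_in: "Pf f \<in> bcontfun" for f
  proof (rule bcontfun_normI)
    have "continuous_on {0..h} (\<lambda>u. integral {0..u} (\<lambda>r. F (apply_bcontfun f r)))"
      by (rule indefinite_integral_continuous_1) (rule integrable_continuous_real[OF cFf])
    then have "continuous_on UNIV (\<lambda>s. integral {0..c s} (\<lambda>r. F (apply_bcontfun f r)))"
      by (rule continuous_on_compose2[OF _ contc]) (use c01 in auto)
    then show "continuous_on UNIV (Pf f)" unfolding Pf_def by (intro continuous_intros)
  next
    fix s
    let ?B = "norm (F 0) + L * norm f"
    have "norm (integral {0..c s} (\<lambda>r. F (apply_bcontfun f r))) \<le> ?B * (c s - 0)"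
    proof (rule integral_bound)
      show "0 \<le> c s" using c01 by auto
      show "continuous_on {0..c s} (\<lambda>r. F (apply_bcontfun f r))" by (rule cFf)
      fix r
      have "norm (F (apply_bcontfun f r)) \<le> norm (F 0) + norm (F (apply_bcontfun f r) - F 0)"
        by (metis add.commute diff_add_cancel norm_triangle_ineq)
      also have "\<dots> \<le> norm (F 0) + L * norm (apply_bcontfun f r - 0)"
        using Lip by (intro add_left_mono) blast
      also have "\<dots> \<le> ?B" using L norm_bounded[of f r] by (auto intro: mult_left_mono)
      finally show "norm (F (apply_bcontfun f r)) \<le> ?B" .
    qed
    also have "\<dots> \<le> ?B * h" using c01[of s] L
      by (intro mult_left_mono) (auto intro!: add_nonneg_nonneg)
    finally show "norm (Pf f s) \<le> norm x0 + ?B * h" unfolding Pf_def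
      by (meson add_left_mono norm_triangle_ineq order_trans)
  qed
  define P where "P f = Bcontfun (Pf f)" for f
  have P_app: "apply_bcontfun (P f) = Pf f" for f unfolding P_def using Pf_in by (simp add: Bcontfun_inverse)
  have "\<exists>!f. P f = f"
  proof (rule banach_fix_type[of "1/2"])
    show "\<forall>f g. dist (P f) (P g) \<le> 1/2 * dist f g"
    proof (intro allI dist_bound)
      fix f g :: "real \<Rightarrow>\<^sub>C 'a" and s
      have "dist (apply_bcontfun (P f) s) (apply_bcontfun (P g) s)
          = norm (integral {0..c s} (\<lambda>r. F (apply_bcontfun f r)) - integral {0..c s} (\<lambda>r. F (apply_bcontfun g r)))"
        by (simp add: P_app Pf_def dist_norm)
      also have "\<dots> = norm (integral {0..c s} (\<lambda>r. F (apply_bcontfun f r) - F (apply_bcontfun g r)))"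
        by (subst integral_diff) (auto intro!: integrable_continuous_real cFf)
      also have "\<dots> \<le> (L * dist f g) * (c s - 0)"
      proof (rule integral_bound)
        show "0 \<le> c s" using c01 by auto
        show "continuous_on {0..c s} (\<lambda>r. F (apply_bcontfun f r) - F (apply_bcontfun g r))"
          by (intro continuous_intros cFf)
        fix r
        have "norm (F (apply_bcontfun f r) - F (apply_bcontfun g r)) \<le> L * norm (apply_bcontfun f r - apply_bcontfun g r)"
          by (rule Lip)
        also have "\<dots> \<le> L * dist f g" using dist_bounded[of f r g] L
          by (intro mult_left_mono) (auto simp: dist_norm)
        finally show "norm (F (apply_bcontfun f r) - F (apply_bcontfun g r)) \<le> L * dist f g" .
      qed
      also have "\<dots> \<le> (L * dist f g) * h" using c01[of s] L by (intro mult_left_mono) auto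
      also have "\<dots> = (h * L) * dist f g" by simp
      also have "\<dots> \<le> 1/2 * dist f g" using h by (intro mult_right_mono) auto
      finally show "dist (apply_bcontfun (P f) s) (apply_bcontfun (P g) s) \<le> 1/2 * dist f g" .
    qed
  qed auto
  then obtain f where fP: "P f = f" by blast
  define W where "W = apply_bcontfun f"
  have Weq: "W s = x0 + integral {0..s} (\<lambda>r. F (W r))" if "s \<in> {0..h}" for s
  proof -
    have "W s = Pf f s" unfolding W_def by (metis P_app fP)
    also have "c s = s" using that by (auto simp: c_def)
    then have "Pf f s = x0 + integral {0..s} (\<lambda>r. F (W r))" by (simp add: Pf_def W_def)
    finally show ?thesis .
  qed
  have "sol (\<lambda>s. F) {0..h} W" unfolding sol_def
  proof
    fix s assume s: "s \<in> {0..h}"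
    have "((\<lambda>u. integral {0..u} (\<lambda>r. F (W r))) has_vector_derivative F (W s)) (at s within {0..h})"
      by (rule integral_has_vector_derivative[OF _ s]) (unfold W_def, rule cFf)
    then have "((\<lambda>u. x0 + integral {0..u} (\<lambda>r. F (W r))) has_vector_derivative F (W s)) (at s within {0..h})"
      by (intro derivative_eq_intros) auto
    then show "(W has_vector_derivative F (W s)) (at s within {0..h})"
      by (rule has_vector_derivative_transform_within[where d=1]) (use s Weq in auto)
  qed
  moreover have "W 0 = x0" using Weq[of 0] h by simp
  ultimately show ?thesis by blast
qed

lemma sol_shift:
  assumes "sol F {a..b} W"
  shows "sol (\<lambda>s. F (s - c)) {a+c..b+c} (\<lambda>s. W (s - c))"
  unfolding sol_def
proof
  fix s assume s: "s \<in> {a+c..b+c}"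
  have im: "(\<lambda>s. s - c) ` {a+c..b+c} = {a..b}"
    by (auto simp: image_iff intro!: bexI[where x="_ + c"])
  have d1: "((\<lambda>s. s - c) has_vector_derivative 1) (at s within {a+c..b+c})"
    by (auto intro!: derivative_eq_intros)
  have d2: "(W has_vector_derivative F (s - c) (W (s - c))) (at (s - c) within (\<lambda>s. s - c) ` {a+c..b+c})"
    unfolding im using assms s unfolding sol_def by auto
  show "((\<lambda>s. W (s - c)) has_vector_derivative F (s - c) (W (s - c))) (at s within {a+c..b+c})"
    using vector_diff_chain_within[OF d1 d2] by (simp add: o_def)
qed

lemma sol_reflect:
  assumes "sol F {a..b} W"
  shows "sol (\<lambda>s x. - F (- s) x) {-b..-a} (\<lambda>s. W (- s))"
  unfolding sol_def
proof
  fix s assume s: "s \<in> {-b..-a}"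
  have im: "uminus ` {-b..-a} = {a..b}"
    by (auto simp: image_iff intro!: bexI[where x="- _"])
  have d1: "(uminus has_vector_derivative -1) (at s within {-b..-a})"
    by (auto intro!: derivative_eq_intros)
  have d2: "(W has_vector_derivative F (- s) (W (- s))) (at (- s) within uminus ` {-b..-a})"
    unfolding im using assms s unfolding sol_def by auto
  show "((\<lambda>s. W (- s)) has_vector_derivative - F (- s) (W (- s))) (at s within {-b..-a})"
    using vector_diff_chain_within[OF d1 d2] by (simp add: o_def)
qed

lemma sol_point: "sol F {a..a} W"
  unfolding sol_def
proof
  fix s assume "s \<in> {a..a}"
  have "\<not> s islimpt {a..a}" by (simp add: islimpt_insert)
  then show "(W has_vector_derivative F s (W s)) (at s within {a..a})" by (rule hvd_bot)
qed

lemma fwd_ex: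
  fixes F :: "'a::banach \<Rightarrow> 'a"
  assumes Lip: "\<And>x y. norm (F x - F y) \<le> L * norm (x - y)" and L: "0 \<le> L"
    and h: "0 < h" "h * L \<le> 1/2"
  shows "\<exists>W. sol (\<lambda>s. F) {0..real n * h} W \<and> W 0 = x0"
proof (induction n arbitrary: x0)
  case 0
  show ?case using sol_point[of "\<lambda>s. F" 0 "\<lambda>_. x0"] by auto
next
  case (Suc n)
  obtain W1 where W1: "sol (\<lambda>s. F) {0..h} W1" "W1 0 = x0" using local_ex[OF Lip L h] by blast
  obtain W2 where W2: "sol (\<lambda>s. F) {0..real n * h} W2" "W2 0 = W1 h" using Suc.IH by blast
  have W2': "sol (\<lambda>s. F) {h..real (Suc n) * h} (\<lambda>s. W2 (s - h))"
    using sol_shift[OF W2(1), of h] by (simp add: algebra_simps)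
  have "sol (\<lambda>s. F) {0..real (Suc n) * h} (\<lambda>s. if s \<le> h then W1 s else W2 (s - h))"
    by (rule sol_glue[OF _ _ W1(1) W2']) (use h W2(2) in auto)
  then show ?case using W1(2) h by (intro exI[where x="\<lambda>s. if s \<le> h then W1 s else W2 (s - h)"]) auto
qed

lemma glob_ex:
  fixes F :: "'a::banach \<Rightarrow> 'a"
  assumes Lip: "\<And>x y. norm (F x - F y) \<le> L * norm (x - y)" and L: "0 \<le> L"
  shows "\<exists>W. sol (\<lambda>s. F) {-T..T} W \<and> W 0 = x0"
proof -
  define h where "h = 1 / (2 * L + 1)"
  have h: "0 < h" "h * L \<le> 1/2" using L by (auto simp: h_def field_simps)
  obtain n where n: "T \<le> real n * h"
    using h(1) by (metis mult.commute pos_divide_le_eq real_arch_simple)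
  obtain W1 where W1: "sol (\<lambda>s. F) {0..real n * h} W1" "W1 0 = x0" using fwd_ex[OF Lip L h] by blast
  have Lip': "norm ((- F x) - (- F y)) \<le> L * norm (x - y)" for x y using Lip[of x y] by (simp add: norm_minus_commute)
  obtain V where V: "sol (\<lambda>s x. - F x) {0..real n * h} V" "V 0 = x0" using fwd_ex[OF Lip' L h] by blast
  have V': "sol (\<lambda>s. F) {- (real n * h)..0} (\<lambda>s. V (- s))"
    using sol_reflect[OF V(1)] by simp
  have "sol (\<lambda>s. F) {- (real n * h)..real n * h} (\<lambda>s. if s \<le> 0 then V (- s) else W1 s)"
    by (rule sol_glue[OF _ _ V' W1(1)]) (use h W1(2) V(2) in auto)
  then have "sol (\<lambda>s. F) {-T..T} (\<lambda>s. if s \<le> 0 then V (- s) else W1 s)"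
    by (rule sol_subset) (use n in auto)
  then show ?thesis using V(2) by (intro exI[where x="\<lambda>s. if s \<le> 0 then V (- s) else W1 s"]) auto
qed

lemma sol_cong:
  assumes "sol F I W" "\<And>s. s \<in> I \<Longrightarrow> F s (W s) = G s (W s)"
  shows "sol G I W"
  using assms unfolding sol_def by auto

lemma rescale:
  fixes X :: "'a::euclidean_space \<Rightarrow> 'a"
  assumes locLip: "\<And>R. \<exists>L. \<forall>x\<in>cball 0 R. \<forall>y\<in>cball 0 R. norm (X x - X y) \<le> L * norm (x - y)"
    and g: "continuous_on {-T..T} g"
    and u: "sol (\<lambda>s. X) {-T..T} u" and v: "sol (\<lambda>s x. g s *\<^sub>R X x) {-T..T} v"
    and a: "a \<in> {-T..T}" and b: "b \<in> {-T..T}" and eq: "u a = v a"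
    and int: "integral {-T..b} g - integral {-T..a} g = b - a"
  shows "u b = v b"
proof -
  let ?I = "{-T..T}"
  have "compact (u ` ?I \<union> v ` ?I)"
    using sol_cont[OF u] sol_cont[OF v] by (intro compact_Un compact_continuous_image) auto
  then obtain R where "\<forall>x\<in>u ` ?I \<union> v ` ?I. norm x \<le> R"
    using compact_imp_bounded bounded_iff by metis
  then have R: "u ` ?I \<union> v ` ?I \<subseteq> cball 0 R" by (auto simp: mem_cball_0)
  obtain L0 where L0: "\<forall>x\<in>cball 0 R. \<forall>y\<in>cball 0 R. norm (X x - X y) \<le> L0 * norm (x - y)"
    using locLip by blast
  define L where "L = max L0 0"
  have L: "0 \<le> L" by (simp add: L_def)
  have LL: "x \<in> cball 0 R \<Longrightarrow> y \<in> cball 0 R \<Longrightarrow> norm (X x - X y) \<le> L * norm (x - y)" for x y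
    using L0 by (metis L_def max.cobounded1 mult_right_mono norm_ge_zero order_trans)
  have Rne: "cball (0::'a) R \<noteq> {}" using R a by auto
  define P where "P = closest_point (cball (0::'a) R)"
  define Xt where "Xt x = X (P x)" for x
  have Pin: "P x \<in> cball 0 R" for x unfolding P_def by (rule closest_point_in_set[OF _ Rne]) auto
  have PL: "norm (P x - P y) \<le> norm (x - y)" for x y
    using closest_point_lipschitz[of "cball (0::'a) R" x y] Rne unfolding P_def dist_norm by auto
  have XtL: "norm (Xt x - Xt y) \<le> L * norm (x - y)" for x y
  proof -
    have "norm (Xt x - Xt y) \<le> L * norm (P x - P y)" unfolding Xt_def using LL Pin by blast
    also have "\<dots> \<le> L * norm (x - y)" using PL L by (intro mult_left_mono) auto
    finally show ?thesis .
  qed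
  have Xt_eq: "x \<in> cball 0 R \<Longrightarrow> Xt x = X x" for x unfolding Xt_def P_def by (simp add: closest_point_self)
  define G where "G s = integral {-T..s} g - integral {-T..a} g" for s
  have "compact (G ` ?I)"
  proof (rule compact_continuous_image)
    show "continuous_on ?I G" unfolding G_def
      by (intro continuous_intros indefinite_integral_continuous_1 integrable_continuous_real g)
  qed auto
  then obtain C where C: "\<forall>x\<in>G ` ?I. norm x \<le> C" using compact_imp_bounded bounded_iff by metis
  obtain Mg where Mg: "\<forall>x\<in>g ` ?I. norm x \<le> Mg"
    using compact_imp_bounded bounded_iff compact_continuous_image[OF g compact_Icc] by metis
  have C0: "0 \<le> C" using C a by (meson imageI norm_ge_zero order_trans)
  define T2 where "T2 = C + 2 * \<bar>T\<bar>"
  obtain W where W: "sol (\<lambda>s. Xt) {-T2..T2} W" "W 0 = u a" using glob_ex[OF XtL L] by blast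
  have uK: "s \<in> ?I \<Longrightarrow> u s \<in> cball 0 R" for s using R by blast
  have vK: "s \<in> ?I \<Longrightarrow> v s \<in> cball 0 R" for s using R by blast
  have c1: "u s = W (s - a)" if s: "s \<in> ?I" for s
  proof (rule uniq[where F="\<lambda>s. Xt" and L=L and a="-T" and b=T and tz=a and Wa=u and Wb="\<lambda>s. W (s - a)" and s=s])
    fix s' x y show "norm (Xt x - Xt y) \<le> L * norm (x - y)" by (rule XtL)
  next
    show "sol (\<lambda>s. Xt) ?I u" by (rule sol_cong[OF u]) (metis Xt_eq uK)
    have "sol (\<lambda>s. Xt) {-T2 + a..T2 + a} (\<lambda>s. W (s - a))" using sol_shift[OF W(1), of a] by simp
    then show "sol (\<lambda>s. Xt) ?I (\<lambda>s. W (s - a))"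
      by (rule sol_subset) (use a C0 T2_def in \<open>auto simp: abs_if\<close>)
  qed (use a s W(2) in auto)
  have c2: "v s = W (G s)" if s: "s \<in> ?I" for s
  proof (rule uniq[where F="\<lambda>s x. g s *\<^sub>R Xt x" and L="Mg * L" and a="-T" and b=T and tz=a and Wa=v and Wb="\<lambda>s. W (G s)" and s=s])
    fix s x y assume s: "s \<in> ?I"
    have "norm (g s *\<^sub>R Xt x - g s *\<^sub>R Xt y) = \<bar>g s\<bar> * norm (Xt x - Xt y)"
      by (metis norm_scaleR scaleR_right_diff_distrib)
    also have "\<dots> \<le> Mg * (L * norm (x - y))"
      using Mg s XtL by (intro mult_mono) auto
    finally show "norm (g s *\<^sub>R Xt x - g s *\<^sub>R Xt y) \<le> Mg * L * norm (x - y)" by simp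
  next
    show "sol (\<lambda>s x. g s *\<^sub>R Xt x) ?I v" by (rule sol_cong[OF v]) (metis Xt_eq vK)
    show "sol (\<lambda>s x. g s *\<^sub>R Xt x) ?I (\<lambda>s. W (G s))" unfolding sol_def
    proof
      fix s assume s: "s \<in> ?I"
      have d1: "(G has_vector_derivative g s) (at s within ?I)"
      proof -
        have "((\<lambda>x. integral {- T..x} g) has_vector_derivative g s) (at s within {- T..T})"
          by (rule integral_has_vector_derivative[OF g s])
        then show ?thesis unfolding G_def by (intro derivative_eq_intros) auto
      qed
      have GI: "G ` ?I \<subseteq> {-T2..T2}" using C T2_def by (auto simp: abs_le_iff)
      have d2: "(W has_vector_derivative Xt (W (G s))) (at (G s) within G ` ?I)"
      proof -
        have "G s \<in> {-T2..T2}" using GI s by blast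
        then have "(W has_vector_derivative Xt (W (G s))) (at (G s) within {-T2..T2})"
          using W(1) unfolding sol_def by blast
        then show ?thesis by (rule has_vector_derivative_within_subset[OF _ GI])
      qed
      show "((\<lambda>s. W (G s)) has_vector_derivative g s *\<^sub>R Xt (W (G s))) (at s within ?I)"
        using vector_diff_chain_within[OF d1 d2] by (simp add: o_def)
    qed
  qed (use a s W(2) eq in \<open>auto simp: G_def\<close>)
  have "G b = b - a" using int by (simp add: G_def)
  then show ?thesis using c1[OF b] c2[OF b] by simp
qed

type_synonym v3 = "real \<times> real \<times> real"

lemma hvd_comps:
  fixes v :: "real \<Rightarrow> v3"
  assumes "(v has_vector_derivative D) (at s within I)"
  shows "((\<lambda>s. fst (v s)) has_real_derivative fst D) (at s within I)"
    "((\<lambda>s. fst (snd (v s))) has_real_derivative fst (snd D)) (at s within I)"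
    "((\<lambda>s. snd (snd (v s))) has_real_derivative snd (snd D)) (at s within I)"
proof -
  have h: "(v has_derivative (\<lambda>h. h *\<^sub>R D)) (at s within I)" using assms by (simp add: has_vector_derivative_def)
  show "((\<lambda>s. fst (v s)) has_real_derivative fst D) (at s within I)"
    unfolding has_field_derivative_def
    by (rule has_derivative_eq_rhs[OF has_derivative_fst[OF h]]) (auto simp: fun_eq_iff)
  show "((\<lambda>s. fst (snd (v s))) has_real_derivative fst (snd D)) (at s within I)"
    unfolding has_field_derivative_def
    by (rule has_derivative_eq_rhs[OF has_derivative_fst[OF has_derivative_snd[OF h]]]) (auto simp: fun_eq_iff)
  show "((\<lambda>s. snd (snd (v s))) has_real_derivative snd (snd D)) (at s within I)"
    unfolding has_field_derivative_def
    by (rule has_derivative_eq_rhs[OF has_derivative_snd[OF has_derivative_snd[OF h]]]) (auto simp: fun_eq_iff)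
qed

lemma hvd_triple:
  assumes "(f1 has_real_derivative D1) (at s within I)" "(f2 has_real_derivative D2) (at s within I)"
    "(f3 has_real_derivative D3) (at s within I)"
  shows "((\<lambda>s. (f1 s, f2 s, f3 s)) has_vector_derivative (D1, D2, D3)) (at s within I)"
  using assms unfolding has_real_derivative_iff_has_vector_derivative
  by (intro has_vector_derivative_Pair)

definition rotm :: "real \<Rightarrow> v3 \<Rightarrow> v3" where
  "rotm \<theta> p = (fst p * cos \<theta> - fst (snd p) * sin \<theta>, fst p * sin \<theta> + fst (snd p) * cos \<theta>, snd (snd p))"

definition Rf :: "v3 \<Rightarrow> v3" where
  "Rf p = (fst (snd p), - fst p, 0)"

lemma rotm_inj: "rotm c p = rotm c q \<Longrightarrow> p = q"
proof -
  assume h: "rotm c p = rotm c q"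
  obtain x y z where p: "p = (x, y, z)" by (cases p) auto
  obtain x' y' z' where q: "q = (x', y', z')" by (cases q) auto
  have e1: "x * cos c - y * sin c = x' * cos c - y' * sin c" and e2: "x * sin c + y * cos c = x' * sin c + y' * cos c"
    and e3: "z = z'" using h by (auto simp: rotm_def p q)
  have i1: "(X * cos c - Y * sin c) * cos c + (X * sin c + Y * cos c) * sin c = X" for X Y
  proof -
    have "(X * cos c - Y * sin c) * cos c + (X * sin c + Y * cos c) * sin c = X * ((sin c)\<^sup>2 + (cos c)\<^sup>2)"
      by algebra
    then show ?thesis by (simp only: sin_cos_squared_add mult_1_right)
  qed
  have i2: "(X * sin c + Y * cos c) * cos c - (X * cos c - Y * sin c) * sin c = Y" for X Y
  proof -
    have "(X * sin c + Y * cos c) * cos c - (X * cos c - Y * sin c) * sin c = Y * ((sin c)\<^sup>2 + (cos c)\<^sup>2)"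
      by algebra
    then show ?thesis by (simp only: sin_cos_squared_add mult_1_right)
  qed
  have "x = x'" using i1[of x y] i1[of x' y'] e1 e2 by simp
  have "y = y'" using i2[of x y] i2[of x' y'] e1 e2 by simp
  show "p = q" using \<open>x = x'\<close> \<open>y = y'\<close> e3 p q by simp
qed


lemma langford_simp: "langford a b c d e t (x, y, z) = (a*x + b*y + x*z, c*x + d*y + y*z, e*z - (x^2 + y^2 + z^2))"
  by (simp add: langford_def)

lemma rot_remove:
  fixes v :: "real \<Rightarrow> v3"
  assumes v: "sol (\<lambda>s p. g s *\<^sub>R langford a b (-b) a e 0 p + kk s *\<^sub>R Rf p) I v"
    and D: "\<And>s. s \<in> I \<Longrightarrow> (D has_real_derivative kk s) (at s within I)"
  shows "sol (\<lambda>s p. g s *\<^sub>R langford a b (-b) a e 0 p) I (\<lambda>s. rotm (D s) (v s))"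
  unfolding sol_def
proof
  fix s assume s: "s \<in> I"
  define v1 where "v1 s = fst (v s)" for s
  define v2 where "v2 s = fst (snd (v s))" for s
  define v3 where "v3 s = snd (snd (v s))" for s
  have vs: "v s = (v1 s, v2 s, v3 s)" for s by (simp add: v1_def v2_def v3_def)
  have dv: "(v has_vector_derivative (g s *\<^sub>R langford a b (-b) a e 0 (v s) + kk s *\<^sub>R Rf (v s))) (at s within I)"
    using v s unfolding sol_def by blast
  have d1: "(v1 has_real_derivative g s * (a * v1 s + b * v2 s + v1 s * v3 s) + kk s * v2 s) (at s within I)"
    using hvd_comps(1)[OF dv] unfolding v1_def[abs_def] by (simp add: vs[symmetric] langford_def Rf_def split: prod.splits) (simp add: v1_def v2_def v3_def)
  have d2: "(v2 has_real_derivative g s * (-b * v1 s + a * v2 s + v2 s * v3 s) - kk s * v1 s) (at s within I)"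
    using hvd_comps(2)[OF dv] unfolding v2_def[abs_def] by (simp add: vs[symmetric] langford_def Rf_def split: prod.splits) (simp add: v1_def v2_def v3_def)
  have d3: "(v3 has_real_derivative g s * (e * v3 s - ((v1 s)\<^sup>2 + (v2 s)\<^sup>2 + (v3 s)\<^sup>2))) (at s within I)"
    using hvd_comps(3)[OF dv] unfolding v3_def[abs_def] by (simp add: vs[symmetric] langford_def Rf_def split: prod.splits) (simp add: v1_def v2_def v3_def)
  have dD: "(D has_real_derivative kk s) (at s within I)" using D s by blast
  let ?V1 = "g s * (a * v1 s + b * v2 s + v1 s * v3 s) + kk s * v2 s"
  let ?V2 = "g s * (-b * v1 s + a * v2 s + v2 s * v3 s) - kk s * v1 s"
  let ?V3 = "g s * (e * v3 s - ((v1 s)\<^sup>2 + (v2 s)\<^sup>2 + (v3 s)\<^sup>2))"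
  have w: "(\<lambda>s. rotm (D s) (v s)) = (\<lambda>s. (v1 s * cos (D s) - v2 s * sin (D s), v1 s * sin (D s) + v2 s * cos (D s), v3 s))"
    by (simp add: fun_eq_iff rotm_def v1_def v2_def v3_def)
  have "((\<lambda>s. (v1 s * cos (D s) - v2 s * sin (D s), v1 s * sin (D s) + v2 s * cos (D s), v3 s)) has_vector_derivative
     (?V1 * cos (D s) - v1 s * (sin (D s) * kk s) - (?V2 * sin (D s) + v2 s * (cos (D s) * kk s)),
      ?V1 * sin (D s) + v1 s * (cos (D s) * kk s) + (?V2 * cos (D s) - v2 s * (sin (D s) * kk s)),
      ?V3)) (at s within I)"
    apply (rule hvd_triple)
    subgoal by (auto intro!: derivative_eq_intros d1 d2 dD simp: algebra_simps)
    subgoal by (auto intro!: derivative_eq_intros d1 d2 dD simp: algebra_simps)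
    subgoal by (rule d3)
    done
  moreover have "(?V1 * cos (D s) - v1 s * (sin (D s) * kk s) - (?V2 * sin (D s) + v2 s * (cos (D s) * kk s)),
      ?V1 * sin (D s) + v1 s * (cos (D s) * kk s) + (?V2 * cos (D s) - v2 s * (sin (D s) * kk s)),
      ?V3) = g s *\<^sub>R langford a b (-b) a e 0 (rotm (D s) (v s))"
  proof -
    have sq: "(v1 s * cos (D s) - v2 s * sin (D s))\<^sup>2 + (v1 s * sin (D s) + v2 s * cos (D s))\<^sup>2 = (v1 s)\<^sup>2 + (v2 s)\<^sup>2"
    proof -
      have "(v1 s * cos (D s) - v2 s * sin (D s))\<^sup>2 + (v1 s * sin (D s) + v2 s * cos (D s))\<^sup>2
          = ((v1 s)\<^sup>2 + (v2 s)\<^sup>2) * ((sin (D s))\<^sup>2 + (cos (D s))\<^sup>2)" by algebra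
      then show ?thesis by (simp only: sin_cos_squared_add mult_1_right)
    qed
    show ?thesis unfolding rotm_def langford_simp[symmetric] vs
      apply (simp add: langford_simp sq)
      apply (intro conjI; algebra)
      done
  qed
  ultimately show "((\<lambda>s. rotm (D s) (v s)) has_vector_derivative g s *\<^sub>R langford a b (-b) a e 0 (rotm (D s) (v s))) (at s within I)"
    unfolding w by simp
qed


lemma prod_bd: "\<bar>x\<bar> \<le> R \<Longrightarrow> \<bar>z'\<bar> \<le> R \<Longrightarrow> \<bar>x - x'\<bar> \<le> N \<Longrightarrow> \<bar>z - z'\<bar> \<le> N \<Longrightarrow> \<bar>x * z - x' * z'\<bar> \<le> 2 * R * N"
  for x z x' z' R N :: real
proof -
  assume h: "\<bar>x\<bar> \<le> R" "\<bar>z'\<bar> \<le> R" "\<bar>x - x'\<bar> \<le> N" "\<bar>z - z'\<bar> \<le> N"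
  have "x * z - x' * z' = x * (z - z') + z' * (x - x')" by (simp add: algebra_simps)
  then have "\<bar>x * z - x' * z'\<bar> \<le> \<bar>x\<bar> * \<bar>z - z'\<bar> + \<bar>z'\<bar> * \<bar>x - x'\<bar>"
    by (metis abs_mult abs_triangle_ineq)
  also have "\<dots> \<le> R * N + R * N" using h by (intro add_mono mult_mono) auto
  finally show ?thesis by linarith
qed

lemma abs3: "\<bar>A + B + C\<bar> \<le> \<bar>A\<bar> + \<bar>B\<bar> + \<bar>C\<bar>" for A B C :: real
  by linarith

lemma abs4: "\<bar>A - B - C - D\<bar> \<le> \<bar>A\<bar> + \<bar>B\<bar> + \<bar>C\<bar> + \<bar>D\<bar>" for A B C D :: real
  by linarith

lemma norm3_le: "norm ((A::real), (B::real), (C::real)) \<le> \<bar>A\<bar> + \<bar>B\<bar> + \<bar>C\<bar>"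
  using norm_Pair_le[of A "(B, C)"] norm_Pair_le[of B C] by simp

lemma langford_loclip:
  "\<exists>L. \<forall>p\<in>cball 0 R. \<forall>q\<in>cball 0 R. norm (langford a b c d e t p - langford a b c d e t q) \<le> L * norm (p - q)"
proof (intro exI ballI)
  fix p q :: v3 assume p: "p \<in> cball 0 R" and q: "q \<in> cball 0 R"
  obtain x y z where pe: "p = (x, y, z)" by (cases p) auto
  obtain x' y' z' where qe: "q = (x', y', z')" by (cases q) auto
  let ?N = "norm (p - q)"
  have np: "norm p \<le> R" and nq: "norm q \<le> R" using p q by (auto simp: mem_cball_0)
  have bx: "\<bar>x\<bar> \<le> R" "\<bar>y\<bar> \<le> R" "\<bar>z\<bar> \<le> R" using np unfolding pe
    by (metis norm_fst_le fst_conv real_norm_def order_trans, metis norm_fst_le norm_snd_le fst_conv snd_conv real_norm_def order_trans,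
        metis norm_snd_le snd_conv real_norm_def order_trans)
  have bx': "\<bar>x'\<bar> \<le> R" "\<bar>y'\<bar> \<le> R" "\<bar>z'\<bar> \<le> R" using nq unfolding qe
    by (metis norm_fst_le fst_conv real_norm_def order_trans, metis norm_fst_le norm_snd_le fst_conv snd_conv real_norm_def order_trans,
        metis norm_snd_le snd_conv real_norm_def order_trans)
  have pq: "p - q = (x - x', y - y', z - z')" by (simp add: pe qe)
  have bd: "\<bar>x - x'\<bar> \<le> ?N" "\<bar>y - y'\<bar> \<le> ?N" "\<bar>z - z'\<bar> \<le> ?N" unfolding pq
    by (metis norm_fst_le fst_conv real_norm_def, metis norm_fst_le norm_snd_le fst_conv snd_conv real_norm_def order_trans,
        metis norm_snd_le snd_conv real_norm_def order_trans)
  have c1: "\<bar>(a*x + b*y + x*z) - (a*x' + b*y' + x'*z')\<bar> \<le> (\<bar>a\<bar> + \<bar>b\<bar> + 2*R) * ?N"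
  proof -
    have "(a*x + b*y + x*z) - (a*x' + b*y' + x'*z') = a*(x-x') + b*(y-y') + (x*z - x'*z')" by (simp add: algebra_simps)
    then have "\<bar>(a*x + b*y + x*z) - (a*x' + b*y' + x'*z')\<bar> \<le> \<bar>a\<bar>*\<bar>x-x'\<bar> + \<bar>b\<bar>*\<bar>y-y'\<bar> + \<bar>x*z - x'*z'\<bar>"
      using abs3[of "a*(x-x')" "b*(y-y')" "x*z - x'*z'"] by (simp only: abs_mult)
    also have "\<dots> \<le> \<bar>a\<bar>*?N + \<bar>b\<bar>*?N + 2*R*?N"
      using mult_left_mono[OF bd(1), of "\<bar>a\<bar>"] mult_left_mono[OF bd(2), of "\<bar>b\<bar>"] prod_bd[OF bx(1) bx'(3) bd(1) bd(3)]
      by linarith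
    finally show ?thesis by (simp add: algebra_simps)
  qed
  have c2: "\<bar>(c*x + d*y + y*z) - (c*x' + d*y' + y'*z')\<bar> \<le> (\<bar>c\<bar> + \<bar>d\<bar> + 2*R) * ?N"
  proof -
    have "(c*x + d*y + y*z) - (c*x' + d*y' + y'*z') = c*(x-x') + d*(y-y') + (y*z - y'*z')" by (simp add: algebra_simps)
    then have "\<bar>(c*x + d*y + y*z) - (c*x' + d*y' + y'*z')\<bar> \<le> \<bar>c\<bar>*\<bar>x-x'\<bar> + \<bar>d\<bar>*\<bar>y-y'\<bar> + \<bar>y*z - y'*z'\<bar>"
      using abs3[of "c*(x-x')" "d*(y-y')" "y*z - y'*z'"] by (simp only: abs_mult)
    also have "\<dots> \<le> \<bar>c\<bar>*?N + \<bar>d\<bar>*?N + 2*R*?N"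
      using mult_left_mono[OF bd(1), of "\<bar>c\<bar>"] mult_left_mono[OF bd(2), of "\<bar>d\<bar>"] prod_bd[OF bx(2) bx'(3) bd(2) bd(3)]
      by linarith
    finally show ?thesis by (simp add: algebra_simps)
  qed
  have c3: "\<bar>(e*z - (x^2 + y^2 + z^2)) - (e*z' - (x'^2 + y'^2 + z'^2))\<bar> \<le> (\<bar>e\<bar> + 6*R) * ?N"
  proof -
    have "(e*z - (x^2 + y^2 + z^2)) - (e*z' - (x'^2 + y'^2 + z'^2)) = e*(z-z') - (x*x - x'*x') - (y*y - y'*y') - (z*z - z'*z')"
      by (simp add: algebra_simps power2_eq_square)
    then have "\<bar>(e*z - (x^2 + y^2 + z^2)) - (e*z' - (x'^2 + y'^2 + z'^2))\<bar> \<le> \<bar>e\<bar>*\<bar>z-z'\<bar> + \<bar>x*x - x'*x'\<bar> + \<bar>y*y - y'*y'\<bar> + \<bar>z*z - z'*z'\<bar>"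
      using abs4[of "e*(z-z')" "x*x - x'*x'" "y*y - y'*y'" "z*z - z'*z'"] by (simp only: abs_mult)
    also have "\<dots> \<le> \<bar>e\<bar>*?N + 2*R*?N + 2*R*?N + 2*R*?N"
      using mult_left_mono[OF bd(3), of "\<bar>e\<bar>"] prod_bd[OF bx(1) bx'(1) bd(1) bd(1)] prod_bd[OF bx(2) bx'(2) bd(2) bd(2)]
        prod_bd[OF bx(3) bx'(3) bd(3) bd(3)]
      by linarith
    finally show ?thesis by (simp add: algebra_simps)
  qed
  have "norm (langford a b c d e t p - langford a b c d e t q)
     \<le> (\<bar>a\<bar> + \<bar>b\<bar> + 2*R) * ?N + (\<bar>c\<bar> + \<bar>d\<bar> + 2*R) * ?N + (\<bar>e\<bar> + 6*R) * ?N"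
    using norm3_le[of "(a*x + b*y + x*z) - (a*x' + b*y' + x'*z')" "(c*x + d*y + y*z) - (c*x' + d*y' + y'*z')"
       "(e*z - (x^2 + y^2 + z^2)) - (e*z' - (x'^2 + y'^2 + z'^2))"] c1 c2 c3
    by (simp add: pe qe langford_simp)
  also have "\<dots> = (\<bar>a\<bar> + \<bar>b\<bar> + \<bar>c\<bar> + \<bar>d\<bar> + \<bar>e\<bar> + 10 * R) * ?N" by (simp add: algebra_simps)
  finally show "norm (langford a b c d e t p - langford a b c d e t q) \<le> (\<bar>a\<bar> + \<bar>b\<bar> + \<bar>c\<bar> + \<bar>d\<bar> + \<bar>e\<bar> + 10 * R) * ?N" .
qed

lemma odd_even_int:
  fixes \<beta> :: "real \<Rightarrow> real"
  assumes cont: "continuous_on {-T..T} \<beta>" and odd: "\<And>s. \<beta> (-s) = - \<beta> s" and x: "x \<in> {-T..T}"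
  shows "integral {-T..-x} \<beta> = integral {-T..x} \<beta>"
proof -
  let ?I = "{-T..T}"
  define B where "B y = integral {-T..y} \<beta>" for y
  define h where "h y = B y - B (- y)" for y
  have dB: "(B has_vector_derivative \<beta> y) (at y within ?I)" if "y \<in> ?I" for y
    unfolding B_def by (rule integral_has_vector_derivative[OF cont that])
  have im: "uminus ` ?I = ?I" by (auto simp: image_iff intro!: bexI[where x="- _"])
  have "\<exists>c. \<forall>y\<in>?I. h y = c"
  proof (rule has_derivative_zero_constant)
    fix y assume y: "y \<in> ?I"
    have d1: "(uminus has_vector_derivative -1) (at y within ?I)" by (auto intro!: derivative_eq_intros)
    have d2: "(B has_vector_derivative \<beta> (- y)) (at (- y) within uminus ` ?I)"
      unfolding im using y by (intro dB) auto
    have "((B \<circ> uminus) has_vector_derivative (-1) *\<^sub>R \<beta> (- y)) (at y within ?I)"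
      by (rule vector_diff_chain_within[OF d1 d2])
    then have "((\<lambda>y. B (- y)) has_vector_derivative \<beta> y) (at y within ?I)" by (simp add: o_def odd)
    then have "(h has_vector_derivative \<beta> y - \<beta> y) (at y within ?I)"
      unfolding h_def by (intro has_vector_derivative_diff dB y)
    then show "(h has_derivative (\<lambda>h. 0)) (at y within ?I)" by (simp add: has_vector_derivative_def)
  qed auto
  then obtain c where c: "\<forall>y\<in>?I. h y = c" by blast
  have "0 \<in> ?I" using x by auto
  then have "h x = h 0" using c x by auto
  then show ?thesis by (simp add: h_def B_def)
qed

lemma int_one_plus:
  fixes \<beta> :: "real \<Rightarrow> real"
  assumes cont: "continuous_on {-T..T} \<beta>" and x: "x \<in> {-T..T}"
  shows "integral {-T..x} (\<lambda>s. 1 + \<beta> s) = (x + T) + integral {-T..x} \<beta>"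
proof -
  have "continuous_on {-T..x} \<beta>" by (rule continuous_on_subset[OF cont]) (use x in auto)
  then have "integral {-T..x} (\<lambda>s. 1 + \<beta> s) = integral {-T..x} (\<lambda>s. 1) + integral {-T..x} \<beta>"
    by (intro integral_add) (auto intro: integrable_continuous_real)
  then show ?thesis using x by simp
qed

lemma gi_odd:
  fixes \<beta> :: "real \<Rightarrow> real"
  assumes cont: "continuous_on {-T..T} \<beta>" and odd: "\<And>s. \<beta> (-s) = - \<beta> s" and x: "x \<in> {-T..T}"
  shows "integral {-T..-x} (\<lambda>s. 1 + \<beta> s) - integral {-T..x} (\<lambda>s. 1 + \<beta> s) = - x - x"
proof -
  have x': "-x \<in> {-T..T}" using x by auto
  show ?thesis using int_one_plus[OF cont x] int_one_plus[OF cont x'] odd_even_int[OF cont odd x] by simp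
qed


lemma rot_case:
  fixes u v :: "real \<Rightarrow> v3"
  assumes v: "sol (\<lambda>s p. g s *\<^sub>R langford a b (-b) a e 0 p + kk s *\<^sub>R Rf p) {-T..T} v"
    and u: "sol (\<lambda>s p. langford a b (-b) a e 0 p) {-T..T} u"
    and g: "continuous_on {-T..T} g" and kk: "continuous_on {-T..T} kk"
    and t: "t \<in> {-T..T}"
    and gi: "integral {-T..-t} g - integral {-T..t} g = -t - t"
    and ki: "integral {-T..t} kk = integral {-T..-t} kk"
    and eq: "u t = v t"
  shows "u (-t) = v (-t)"
proof -
  let ?I = "{-T..T}"
  let ?X = "langford a b (-b) a e 0"
  define D where "D s = integral {-T..s} kk" for s
  have dD: "(D has_real_derivative kk s) (at s within ?I)" if "s \<in> ?I" for s
    unfolding D_def has_real_derivative_iff_has_vector_derivative by (rule integral_has_vector_derivative[OF kk that])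
  have w: "sol (\<lambda>s p. g s *\<^sub>R ?X p) ?I (\<lambda>s. rotm (D s) (v s))" by (rule rot_remove[OF v dD])
  have u': "sol (\<lambda>s p. 1 *\<^sub>R ?X p + 0 *\<^sub>R Rf p) ?I u" by (rule sol_cong[OF u]) simp
  have dc: "((\<lambda>_. D t) has_real_derivative 0) (at s within ?I)" for s by (rule DERIV_const)
  have ut: "sol (\<lambda>s p. 1 *\<^sub>R ?X p) ?I (\<lambda>s. rotm (D t) (u s))"
    by (rule rot_remove[OF u' dc])
  have "rotm (D t) (u (-t)) = rotm (D (-t)) (v (-t))"
  proof (rule rescale[where X="?X" and g=g and T=T and a=t and b="-t" and u="\<lambda>s. rotm (D t) (u s)" and v="\<lambda>s. rotm (D s) (v s)"])
    show "\<exists>L. \<forall>x\<in>cball 0 R. \<forall>y\<in>cball 0 R. norm (?X x - ?X y) \<le> L * norm (x - y)" for R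
      by (rule langford_loclip)
    show "sol (\<lambda>s. ?X) ?I (\<lambda>s. rotm (D t) (u s))" by (rule sol_cong[OF ut]) simp
  qed (use g w t gi eq in auto)
  moreover have "D (-t) = D t" using ki by (simp add: D_def)
  ultimately show ?thesis using rotm_inj by metis
qed

lemma same_mrf_I:
  assumes "\<And>T t u v. t \<in> {-T..T} \<Longrightarrow> sol X {-T..T} u \<Longrightarrow> sol Y {-T..T} v \<Longrightarrow> u t = v t \<Longrightarrow> u (-t) = v (-t)"
  shows "same_mrf X Y"
  unfolding same_mrf_def
proof (intro allI impI)
  fix t p q r assume h: "mrf_graph X t p q \<and> mrf_graph Y t p r"
  have seg: "closed_segment (-t) t = {-\<bar>t\<bar>..\<bar>t\<bar>}" by (auto simp: closed_segment_eq_real_ivl)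
  obtain u where u: "sol X {-\<bar>t\<bar>..\<bar>t\<bar>} u" "u t = p" "u (-t) = q"
    using h unfolding mrf_graph_def is_solution_on_def sol_def seg by blast
  obtain v where v: "sol Y {-\<bar>t\<bar>..\<bar>t\<bar>} v" "v t = p" "v (-t) = r"
    using h unfolding mrf_graph_def is_solution_on_def sol_def seg by blast
  have "u (-t) = v (-t)" by (rule assms[OF _ u(1) v(1)]) (use u v in auto)
  then show "q = r" using u v by simp
qed

lemma langford_t: "langford a b c d e s p = langford a b c d e 0 p"
  by (simp add: langford_def)

lemma odd_cont_on: "odd_cont f \<Longrightarrow> continuous_on A f"
  unfolding odd_cont_def by (auto intro: continuous_on_subset)

lemma odd_cont_odd: "odd_cont f \<Longrightarrow> f (- s) = - f s"
  unfolding odd_cont_def by auto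

lemma case1:
  assumes a1: "odd_cont \<alpha>1"
  shows "same_mrf (langford a b c d e)
      (\<lambda>t (x, y, z). ((a*x + b*y + x*z) * (1 + \<alpha>1 t),
                       (c*x + d*y + y*z) * (1 + \<alpha>1 t),
                       (e*z - (x^2 + y^2 + z^2)) * (1 + \<alpha>1 t)))"
proof (rule same_mrf_I)
  fix T t u v assume t: "t \<in> {-T..T}" and u: "sol (langford a b c d e) {-T..T} u"
    and v: "sol (\<lambda>t (x, y, z). ((a*x + b*y + x*z) * (1 + \<alpha>1 t), (c*x + d*y + y*z) * (1 + \<alpha>1 t),
                       (e*z - (x^2 + y^2 + z^2)) * (1 + \<alpha>1 t))) {-T..T} v"
    and eq: "u t = v t"
  let ?X = "langford a b c d e 0"
  show "u (-t) = v (-t)"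
  proof (rule rescale[where X="?X" and g="\<lambda>s. 1 + \<alpha>1 s" and T=T and a=t and b="-t" and u=u and v=v])
    show "\<exists>L. \<forall>x\<in>cball 0 R. \<forall>y\<in>cball 0 R. norm (?X x - ?X y) \<le> L * norm (x - y)" for R
      by (rule langford_loclip)
    show "continuous_on {-T..T} (\<lambda>s. 1 + \<alpha>1 s)" using odd_cont_on[OF a1] by (intro continuous_intros)
    show "sol (\<lambda>s. ?X) {-T..T} u" by (rule sol_cong[OF u]) (simp add: langford_def)
    show "sol (\<lambda>s x. (1 + \<alpha>1 s) *\<^sub>R ?X x) {-T..T} v"
      by (rule sol_cong[OF v]) (auto simp: langford_def algebra_simps split: prod.splits)
    show "integral {-T..-t} (\<lambda>s. 1 + \<alpha>1 s) - integral {-T..t} (\<lambda>s. 1 + \<alpha>1 s) = -t - t"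
      by (rule gi_odd[OF odd_cont_on[OF a1] odd_cont_odd[OF a1] t])
  qed (use t eq in auto)
qed


lemma case2:
  assumes a1: "odd_cont \<alpha>1" and a2: "odd_cont \<alpha>2" and a3: "odd_cont \<alpha>3"
  shows "same_mrf (langford a b (-b) a e)
      (\<lambda>t (x, y, z). ((a*x + b*y + x*z) * (1 + \<alpha>1 t) + x*(a + z)*\<alpha>2 t + y*\<alpha>3 t,
                       (-b*x + a*y + y*z) * (1 + \<alpha>1 t) + y*(a + z)*\<alpha>2 t - x*\<alpha>3 t,
                       (e*z - x^2 - y^2 - z^2) * (1 + \<alpha>1 t + \<alpha>2 t)))"
proof (rule same_mrf_I)
  fix T t u v assume t: "t \<in> {-T..T}" and u: "sol (langford a b (-b) a e) {-T..T} u"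
    and v: "sol (\<lambda>t (x, y, z). ((a*x + b*y + x*z) * (1 + \<alpha>1 t) + x*(a + z)*\<alpha>2 t + y*\<alpha>3 t,
                       (-b*x + a*y + y*z) * (1 + \<alpha>1 t) + y*(a + z)*\<alpha>2 t - x*\<alpha>3 t,
                       (e*z - x^2 - y^2 - z^2) * (1 + \<alpha>1 t + \<alpha>2 t))) {-T..T} v"
    and eq: "u t = v t"
  let ?X = "langford a b (-b) a e 0"
  have c1: "continuous_on {-T..T} \<alpha>1" "continuous_on {-T..T} \<alpha>2" "continuous_on {-T..T} \<alpha>3"
    using odd_cont_on a1 a2 a3 by blast+
  have cg: "continuous_on {-T..T} (\<lambda>s. \<alpha>1 s + \<alpha>2 s)" using c1 by (intro continuous_intros)
  have ck: "continuous_on {-T..T} (\<lambda>s. \<alpha>3 s - b * \<alpha>2 s)" using c1 by (intro continuous_intros)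
  show "u (-t) = v (-t)"
  proof (rule rot_case[where g="\<lambda>s. 1 + (\<alpha>1 s + \<alpha>2 s)" and kk="\<lambda>s. \<alpha>3 s - b * \<alpha>2 s" and T=T])
    show "sol (\<lambda>s p. (1 + (\<alpha>1 s + \<alpha>2 s)) *\<^sub>R ?X p + (\<alpha>3 s - b * \<alpha>2 s) *\<^sub>R Rf p) {-T..T} v"
      by (rule sol_cong[OF v]) (auto simp: langford_def Rf_def algebra_simps power2_eq_square split: prod.splits)
    show "sol (\<lambda>s p. ?X p) {-T..T} u" by (rule sol_cong[OF u]) (simp add: langford_def)
    show "continuous_on {-T..T} (\<lambda>s. 1 + (\<alpha>1 s + \<alpha>2 s))" using c1 by (intro continuous_intros)
    show "integral {-T..-t} (\<lambda>s. 1 + (\<alpha>1 s + \<alpha>2 s)) - integral {-T..t} (\<lambda>s. 1 + (\<alpha>1 s + \<alpha>2 s)) = -t - t"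
      by (rule gi_odd[OF cg _ t]) (simp add: odd_cont_odd[OF a1] odd_cont_odd[OF a2])
    show "integral {-T..t} (\<lambda>s. \<alpha>3 s - b * \<alpha>2 s) = integral {-T..-t} (\<lambda>s. \<alpha>3 s - b * \<alpha>2 s)"
      by (rule odd_even_int[OF ck _ t, symmetric]) (simp add: odd_cont_odd[OF a3] odd_cont_odd[OF a2])
  qed (use ck t eq in auto)
qed

definition Hf :: "real \<Rightarrow> v3 \<Rightarrow> real" where
  "Hf a p = ((fst p)\<^sup>2 + (fst (snd p))\<^sup>2) * (4*a * snd (snd p) + (fst p)\<^sup>2 + (fst (snd p))\<^sup>2 + 2 * (snd (snd p))\<^sup>2)"

lemma H_const:
  fixes v :: "real \<Rightarrow> v3"
  assumes v: "sol (\<lambda>s p. g s *\<^sub>R langford a b (-b) a (-2*a) 0 p + kk s p *\<^sub>R Rf p) {-T..T} v"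
    and x: "x \<in> {-T..T}" and y: "y \<in> {-T..T}"
  shows "Hf a (v x) = Hf a (v y)"
proof -
  let ?I = "{-T..T}"
  have "\<exists>c. \<forall>s\<in>?I. Hf a (v s) = c"
  proof (rule has_derivative_zero_constant)
    fix s assume s: "s \<in> ?I"
    define v1 where "v1 s = fst (v s)" for s
    define v2 where "v2 s = fst (snd (v s))" for s
    define v3 where "v3 s = snd (snd (v s))" for s
    have vs: "v s = (v1 s, v2 s, v3 s)" for s by (simp add: v1_def v2_def v3_def)
    have dv: "(v has_vector_derivative (g s *\<^sub>R langford a b (-b) a (-2*a) 0 (v s) + kk s (v s) *\<^sub>R Rf (v s))) (at s within ?I)"
      using v s unfolding sol_def by blast
    have d1: "(v1 has_real_derivative g s * (a * v1 s + b * v2 s + v1 s * v3 s) + kk s (v s) * v2 s) (at s within ?I)"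
      using hvd_comps(1)[OF dv] unfolding v1_def[abs_def] by (simp add: vs[symmetric] langford_def Rf_def split: prod.splits) (simp add: v1_def v2_def v3_def)
    have d2: "(v2 has_real_derivative g s * (-b * v1 s + a * v2 s + v2 s * v3 s) - kk s (v s) * v1 s) (at s within ?I)"
      using hvd_comps(2)[OF dv] unfolding v2_def[abs_def] by (simp add: vs[symmetric] langford_def Rf_def split: prod.splits) (simp add: v1_def v2_def v3_def)
    have d3: "(v3 has_real_derivative g s * (-2*a * v3 s - ((v1 s)\<^sup>2 + (v2 s)\<^sup>2 + (v3 s)\<^sup>2))) (at s within ?I)"
      using hvd_comps(3)[OF dv] unfolding v3_def[abs_def] by (simp add: vs[symmetric] langford_def Rf_def split: prod.splits) (simp add: v1_def v2_def v3_def)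
    have H: "(\<lambda>s. Hf a (v s)) = (\<lambda>s. ((v1 s)\<^sup>2 + (v2 s)\<^sup>2) * (4*a * v3 s + (v1 s)\<^sup>2 + (v2 s)\<^sup>2 + 2*(v3 s)\<^sup>2))"
      by (simp add: fun_eq_iff Hf_def v1_def v2_def v3_def)
    have "((\<lambda>s. ((v1 s)\<^sup>2 + (v2 s)\<^sup>2) * (4*a * v3 s + (v1 s)\<^sup>2 + (v2 s)\<^sup>2 + 2*(v3 s)\<^sup>2)) has_real_derivative 0) (at s within ?I)"
      apply (rule derivative_eq_intros d1 d2 d3 refl)+
      by (simp add: power2_eq_square; algebra)
    moreover have z: "((*) (0::real)) = (\<lambda>h. 0)" by (rule ext) simp
    ultimately show "((\<lambda>s. Hf a (v s)) has_derivative (\<lambda>h. 0)) (at s within ?I)"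
      unfolding H has_field_derivative_def by metis
  qed auto
  then show ?thesis using x y by metis
qed


lemma case3:
  assumes a1: "odd_cont \<alpha>1" and a2: "odd_cont \<alpha>2" and a3: "odd_cont \<alpha>3" and a4: "odd_cont \<alpha>4"
  shows "same_mrf (langford a b (-b) a (-2*a))
      (\<lambda>t (x, y, z). ((a*x + b*y + x*z) * (1 + \<alpha>1 t) + x*(a + z)*\<alpha>2 t + y*\<alpha>3 t
                          - y*(x^2 + y^2)*(4*a*z + x^2 + y^2 + 2*z^2)*\<alpha>4 t,
                       (-b*x + a*y + y*z) * (1 + \<alpha>1 t) + y*(a + z)*\<alpha>2 t - x*\<alpha>3 t
                          + x*(x^2 + y^2)*(4*a*z + x^2 + y^2 + 2*z^2)*\<alpha>4 t,
                       -(2*a*z + x^2 + y^2 + z^2) * (1 + \<alpha>1 t + \<alpha>2 t)))"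
proof (rule same_mrf_I)
  fix T t u v assume t: "t \<in> {-T..T}" and u: "sol (langford a b (-b) a (-2*a)) {-T..T} u"
    and v: "sol (\<lambda>t (x, y, z). ((a*x + b*y + x*z) * (1 + \<alpha>1 t) + x*(a + z)*\<alpha>2 t + y*\<alpha>3 t
                          - y*(x^2 + y^2)*(4*a*z + x^2 + y^2 + 2*z^2)*\<alpha>4 t,
                       (-b*x + a*y + y*z) * (1 + \<alpha>1 t) + y*(a + z)*\<alpha>2 t - x*\<alpha>3 t
                          + x*(x^2 + y^2)*(4*a*z + x^2 + y^2 + 2*z^2)*\<alpha>4 t,
                       -(2*a*z + x^2 + y^2 + z^2) * (1 + \<alpha>1 t + \<alpha>2 t))) {-T..T} v"
    and eq: "u t = v t"
  let ?X = "langford a b (-b) a (-2*a) 0"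
  have c1: "continuous_on {-T..T} \<alpha>1" "continuous_on {-T..T} \<alpha>2" "continuous_on {-T..T} \<alpha>3" "continuous_on {-T..T} \<alpha>4"
    using odd_cont_on a1 a2 a3 a4 by blast+
  have cg: "continuous_on {-T..T} (\<lambda>s. \<alpha>1 s + \<alpha>2 s)" using c1 by (intro continuous_intros)
  have v1: "sol (\<lambda>s p. (1 + (\<alpha>1 s + \<alpha>2 s)) *\<^sub>R ?X p + (\<alpha>3 s - b * \<alpha>2 s - \<alpha>4 s * Hf a p) *\<^sub>R Rf p) {-T..T} v"
    by (rule sol_cong[OF v]) (auto simp: langford_def Rf_def Hf_def algebra_simps power2_eq_square split: prod.splits)
  define H0 where "H0 = Hf a (v t)"
  have Hc: "s \<in> {-T..T} \<Longrightarrow> Hf a (v s) = H0" for s unfolding H0_def by (rule H_const[OF v1 _ t])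
  have ck: "continuous_on {-T..T} (\<lambda>s. \<alpha>3 s - b * \<alpha>2 s - \<alpha>4 s * H0)" using c1 by (intro continuous_intros)
  show "u (-t) = v (-t)"
  proof (rule rot_case[where g="\<lambda>s. 1 + (\<alpha>1 s + \<alpha>2 s)" and kk="\<lambda>s. \<alpha>3 s - b * \<alpha>2 s - \<alpha>4 s * H0" and T=T])
    show "sol (\<lambda>s p. (1 + (\<alpha>1 s + \<alpha>2 s)) *\<^sub>R ?X p + (\<alpha>3 s - b * \<alpha>2 s - \<alpha>4 s * H0) *\<^sub>R Rf p) {-T..T} v"
      by (rule sol_cong[OF v1]) (simp add: Hc)
    show "sol (\<lambda>s p. ?X p) {-T..T} u" by (rule sol_cong[OF u]) (simp add: langford_def)
    show "continuous_on {-T..T} (\<lambda>s. 1 + (\<alpha>1 s + \<alpha>2 s))" using c1 by (intro continuous_intros)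
    show "integral {-T..-t} (\<lambda>s. 1 + (\<alpha>1 s + \<alpha>2 s)) - integral {-T..t} (\<lambda>s. 1 + (\<alpha>1 s + \<alpha>2 s)) = -t - t"
      by (rule gi_odd[OF cg _ t]) (simp add: odd_cont_odd[OF a1] odd_cont_odd[OF a2])
    show "integral {-T..t} (\<lambda>s. \<alpha>3 s - b * \<alpha>2 s - \<alpha>4 s * H0) = integral {-T..-t} (\<lambda>s. \<alpha>3 s - b * \<alpha>2 s - \<alpha>4 s * H0)"
      by (rule odd_even_int[OF ck _ t, symmetric]) (simp add: odd_cont_odd[OF a3] odd_cont_odd[OF a2] odd_cont_odd[OF a4])
  qed (use ck t eq in auto)
qed

lemma cos_lip: "\<bar>cos x - cos y\<bar> \<le> \<bar>x - y\<bar>" for x y :: real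
proof -
  have "\<bar>cos x - cos y\<bar> = 2 * \<bar>sin ((x + y) / 2)\<bar> * \<bar>sin ((y - x) / 2)\<bar>"
    by (simp add: cos_diff_cos abs_mult)
  also have "\<dots> \<le> 2 * 1 * \<bar>(y - x) / 2\<bar>"
    by (intro mult_mono abs_sin_x_le_abs_x) auto
  finally show ?thesis by simp
qed

lemma sin_lip: "\<bar>sin x - sin y\<bar> \<le> \<bar>x - y\<bar>" for x y :: real
proof -
  have "\<bar>sin x - sin y\<bar> = 2 * \<bar>sin ((x - y) / 2)\<bar> * \<bar>cos ((x + y) / 2)\<bar>"
    by (simp add: sin_diff_sin abs_mult)
  also have "\<dots> \<le> 2 * \<bar>(x - y) / 2\<bar> * 1"
    by (intro mult_mono abs_sin_x_le_abs_x) auto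
  finally show ?thesis by simp
qed

lemma rotm_inv: "rotm (- c) (rotm c p) = p"
proof -
  obtain x y z where p: "p = (x, y, z)" by (cases p) auto
  have i1: "(x * cos c - y * sin c) * cos c + (x * sin c + y * cos c) * sin c = x * ((sin c)\<^sup>2 + (cos c)\<^sup>2)"
    by algebra
  have i2: "- ((x * cos c - y * sin c) * sin c) + (x * sin c + y * cos c) * cos c = y * ((sin c)\<^sup>2 + (cos c)\<^sup>2)"
    by algebra
  show ?thesis using i1 i2 by (simp add: rotm_def p)
qed

lemma rotm0: "rotm 0 p = p" by (simp add: rotm_def)

lemma F_lip:
  fixes e1 e2 c A3 A4 A5 M x y :: real
  assumes A: "\<bar>A3\<bar> \<le> M" "\<bar>A4\<bar> \<le> M" "\<bar>A5\<bar> \<le> M"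
  shows "\<bar>c * ((e1 * cos x + e2 * sin x)\<^sup>2 * A3 + (e1 * cos x + e2 * sin x) * (- e1 * sin x + e2 * cos x) * A4 + (- e1 * sin x + e2 * cos x)\<^sup>2 * A5)
        - c * ((e1 * cos y + e2 * sin y)\<^sup>2 * A3 + (e1 * cos y + e2 * sin y) * (- e1 * sin y + e2 * cos y) * A4 + (- e1 * sin y + e2 * cos y)\<^sup>2 * A5)\<bar>
      \<le> (\<bar>c\<bar> * (6 * M * (\<bar>e1\<bar> + \<bar>e2\<bar>)\<^sup>2)) * \<bar>x - y\<bar>"
proof -
  define E where "E = \<bar>e1\<bar> + \<bar>e2\<bar>"
  define r1 where "r1 d = e1 * cos d + e2 * sin d" for d
  define r2 where "r2 d = - e1 * sin d + e2 * cos d" for d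
  have M0: "0 \<le> M" using A by linarith
  have E0: "0 \<le> E" by (simp add: E_def)
  have b1: "\<bar>r1 d\<bar> \<le> E" for d
  proof -
    have "\<bar>r1 d\<bar> \<le> \<bar>e1\<bar> * \<bar>cos d\<bar> + \<bar>e2\<bar> * \<bar>sin d\<bar>" unfolding r1_def by (metis abs_mult abs_triangle_ineq)
    also have "\<dots> \<le> \<bar>e1\<bar> * 1 + \<bar>e2\<bar> * 1" by (intro add_mono mult_left_mono) auto
    finally show ?thesis by (simp add: E_def)
  qed
  have b2: "\<bar>r2 d\<bar> \<le> E" for d
  proof -
    have "\<bar>r2 d\<bar> \<le> \<bar>e1\<bar> * \<bar>sin d\<bar> + \<bar>e2\<bar> * \<bar>cos d\<bar>" unfolding r2_def
      by (metis abs_minus_cancel abs_mult abs_triangle_ineq minus_mult_left)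
    also have "\<dots> \<le> \<bar>e1\<bar> * 1 + \<bar>e2\<bar> * 1" by (intro add_mono mult_left_mono) auto
    finally show ?thesis by (simp add: E_def)
  qed
  let ?N = "E * \<bar>x - y\<bar>"
  have l1: "\<bar>r1 x - r1 y\<bar> \<le> ?N"
  proof -
    have "r1 x - r1 y = e1 * (cos x - cos y) + e2 * (sin x - sin y)" by (simp add: r1_def algebra_simps)
    then have "\<bar>r1 x - r1 y\<bar> \<le> \<bar>e1\<bar> * \<bar>cos x - cos y\<bar> + \<bar>e2\<bar> * \<bar>sin x - sin y\<bar>" by (metis abs_mult abs_triangle_ineq)
    also have "\<dots> \<le> \<bar>e1\<bar> * \<bar>x - y\<bar> + \<bar>e2\<bar> * \<bar>x - y\<bar>" by (intro add_mono mult_left_mono cos_lip sin_lip) auto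
    finally show ?thesis by (simp add: E_def algebra_simps)
  qed
  have l2: "\<bar>r2 x - r2 y\<bar> \<le> ?N"
  proof -
    have "r2 x - r2 y = - e1 * (sin x - sin y) + e2 * (cos x - cos y)" by (simp add: r2_def algebra_simps)
    then have "\<bar>r2 x - r2 y\<bar> \<le> \<bar>e1\<bar> * \<bar>sin x - sin y\<bar> + \<bar>e2\<bar> * \<bar>cos x - cos y\<bar>"
      by (metis abs_minus_cancel abs_mult abs_triangle_ineq minus_mult_left)
    also have "\<dots> \<le> \<bar>e1\<bar> * \<bar>x - y\<bar> + \<bar>e2\<bar> * \<bar>x - y\<bar>" by (intro add_mono mult_left_mono cos_lip sin_lip) auto
    finally show ?thesis by (simp add: E_def algebra_simps)
  qed
  have p11: "\<bar>r1 x * r1 x - r1 y * r1 y\<bar> \<le> 2 * E * ?N" by (rule prod_bd[OF b1 b1 l1 l1])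
  have p12: "\<bar>r1 x * r2 x - r1 y * r2 y\<bar> \<le> 2 * E * ?N" by (rule prod_bd[OF b1 b2 l1 l2])
  have p22: "\<bar>r2 x * r2 x - r2 y * r2 y\<bar> \<le> 2 * E * ?N" by (rule prod_bd[OF b2 b2 l2 l2])
  have "(r1 x)\<^sup>2 * A3 + r1 x * r2 x * A4 + (r2 x)\<^sup>2 * A5 - ((r1 y)\<^sup>2 * A3 + r1 y * r2 y * A4 + (r2 y)\<^sup>2 * A5)
      = A3 * (r1 x * r1 x - r1 y * r1 y) + A4 * (r1 x * r2 x - r1 y * r2 y) + A5 * (r2 x * r2 x - r2 y * r2 y)"
    by (simp add: algebra_simps power2_eq_square)
  then have "\<bar>(r1 x)\<^sup>2 * A3 + r1 x * r2 x * A4 + (r2 x)\<^sup>2 * A5 - ((r1 y)\<^sup>2 * A3 + r1 y * r2 y * A4 + (r2 y)\<^sup>2 * A5)\<bar>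
      \<le> \<bar>A3\<bar> * \<bar>r1 x * r1 x - r1 y * r1 y\<bar> + \<bar>A4\<bar> * \<bar>r1 x * r2 x - r1 y * r2 y\<bar> + \<bar>A5\<bar> * \<bar>r2 x * r2 x - r2 y * r2 y\<bar>"
    using abs3[of "A3 * (r1 x * r1 x - r1 y * r1 y)" "A4 * (r1 x * r2 x - r1 y * r2 y)" "A5 * (r2 x * r2 x - r2 y * r2 y)"]
    by (simp only: abs_mult)
  also have "\<dots> \<le> M * (2 * E * ?N) + M * (2 * E * ?N) + M * (2 * E * ?N)"
    using p11 p12 p22 A by (intro add_mono mult_mono) auto
  also have "\<dots> = (6 * M * E\<^sup>2) * \<bar>x - y\<bar>" by (simp add: power2_eq_square algebra_simps)
  finally have Q: "\<bar>(r1 x)\<^sup>2 * A3 + r1 x * r2 x * A4 + (r2 x)\<^sup>2 * A5 - ((r1 y)\<^sup>2 * A3 + r1 y * r2 y * A4 + (r2 y)\<^sup>2 * A5)\<bar>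
      \<le> (6 * M * E\<^sup>2) * \<bar>x - y\<bar>" .
  have "\<bar>c * ((r1 x)\<^sup>2 * A3 + r1 x * r2 x * A4 + (r2 x)\<^sup>2 * A5) - c * ((r1 y)\<^sup>2 * A3 + r1 y * r2 y * A4 + (r2 y)\<^sup>2 * A5)\<bar>
      = \<bar>c\<bar> * \<bar>(r1 x)\<^sup>2 * A3 + r1 x * r2 x * A4 + (r2 x)\<^sup>2 * A5 - ((r1 y)\<^sup>2 * A3 + r1 y * r2 y * A4 + (r2 y)\<^sup>2 * A5)\<bar>"
    by (simp add: abs_mult[symmetric] algebra_simps)
  also have "\<dots> \<le> \<bar>c\<bar> * ((6 * M * E\<^sup>2) * \<bar>x - y\<bar>)" by (intro mult_left_mono Q) auto
  finally show ?thesis unfolding r1_def r2_def E_def by (simp add: mult.assoc)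
qed

lemma cont_bound:
  fixes f :: "real \<Rightarrow> real"
  assumes "continuous_on {-T..T} f"
  shows "\<exists>M. \<forall>s\<in>{-T..T}. \<bar>f s\<bar> \<le> M"
  using compact_imp_bounded[OF compact_continuous_image[OF assms compact_Icc]] unfolding bounded_iff by auto

lemma D_even:
  fixes v :: "real \<Rightarrow> v3"
  assumes a1: "odd_cont \<alpha>1" and a2: "odd_cont \<alpha>2" and a3: "odd_cont \<alpha>3" and a4: "odd_cont \<alpha>4" and a5: "odd_cont \<alpha>5"
    and v: "sol (\<lambda>s p. (1 + \<alpha>1 s) *\<^sub>R langford a 0 (-0) a (-2*a) 0 p + kk s *\<^sub>R Rf p) {-T..T} v"
    and kkd: "\<And>s. s \<in> {-T..T} \<Longrightarrow> kk s = \<alpha>2 s + (4*a * snd (snd (v s)) + (fst (v s))\<^sup>2 + (fst (snd (v s)))\<^sup>2 + 2 * (snd (snd (v s)))\<^sup>2)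
          * ((fst (v s))\<^sup>2 * \<alpha>3 s + fst (v s) * fst (snd (v s)) * \<alpha>4 s + (fst (snd (v s)))\<^sup>2 * \<alpha>5 s)"
    and kc: "continuous_on {-T..T} kk"
    and x: "x \<in> {-T..T}"
  shows "integral {-T..x} kk = integral {-T..-x} kk"
proof -
  let ?I = "{-T..T}"
  let ?X = "langford a 0 (-0) a (-2*a) 0"
  have T0: "0 \<in> ?I" using x by auto
  have x': "-x \<in> ?I" using x by auto
  define H0 where "H0 = Hf a (v 0)"
  have Hc: "s \<in> ?I \<Longrightarrow> Hf a (v s) = H0" for s
    unfolding H0_def by (rule H_const[where b=0 and kk="\<lambda>s p. kk s", OF v _ T0])
  have ca: "continuous_on ?I \<alpha>1" "continuous_on ?I \<alpha>2" "continuous_on ?I \<alpha>3" "continuous_on ?I \<alpha>4" "continuous_on ?I \<alpha>5"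
    using odd_cont_on a1 a2 a3 a4 a5 by blast+
  show ?thesis
  proof (cases "H0 = 0")
    case True
    have kk2: "kk s = \<alpha>2 s" if s: "s \<in> ?I" for s
    proof -
      obtain x1 y1 z1 where p: "v s = (x1, y1, z1)" by (cases "v s") auto
      have "(x1\<^sup>2 + y1\<^sup>2) * (4*a * z1 + x1\<^sup>2 + y1\<^sup>2 + 2 * z1\<^sup>2) = 0"
        using Hc[OF s] True by (simp add: Hf_def p)
      then have "x1\<^sup>2 + y1\<^sup>2 = 0 \<or> 4*a * z1 + x1\<^sup>2 + y1\<^sup>2 + 2 * z1\<^sup>2 = 0" by simp
      then have "(4*a * z1 + x1\<^sup>2 + y1\<^sup>2 + 2 * z1\<^sup>2) * (x1\<^sup>2 * \<alpha>3 s + x1 * y1 * \<alpha>4 s + y1\<^sup>2 * \<alpha>5 s) = 0"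
      proof
        assume "x1\<^sup>2 + y1\<^sup>2 = 0"
        then have "x1 = 0" "y1 = 0" by (auto simp: add_nonneg_eq_0_iff)
        then show ?thesis by simp
      qed simp
      then show ?thesis using kkd[OF s] by (simp add: p)
    qed
    have "integral {-T..x} kk = integral {-T..x} \<alpha>2" by (rule integral_cong) (use x kk2 in auto)
    also have "\<dots> = integral {-T..-x} \<alpha>2" by (rule odd_even_int[OF ca(2) odd_cont_odd[OF a2] x, symmetric])
    also have "\<dots> = integral {-T..-x} kk" by (rule integral_cong) (use x kk2 in auto)
    finally show ?thesis .
  next
    case False
    define D where "D s = integral {-T..s} kk - integral {-T..0} kk" for s
    have dD: "(D has_real_derivative kk s) (at s within ?I)" if "s \<in> ?I" for s
    proof -
      have "((\<lambda>s. integral {-T..s} kk) has_vector_derivative kk s) (at s within ?I)"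
        by (rule integral_has_vector_derivative[OF kc that])
      then show ?thesis unfolding D_def has_real_derivative_iff_has_vector_derivative
        by (intro derivative_eq_intros) auto
    qed
    have D0: "D 0 = 0" by (simp add: D_def)
    define w where "w s = rotm (D s) (v s)" for s
    have w: "sol (\<lambda>s p. (1 + \<alpha>1 s) *\<^sub>R ?X p) ?I w" unfolding w_def[abs_def] by (rule rot_remove[OF v dD])
    have w0: "w 0 = v 0" by (simp add: w_def D0 rotm0)
    define e1 where "e1 = fst (v 0)"
    define e2 where "e2 = fst (snd (v 0))"
    define cc where "cc s = fst (w s) * e2 - fst (snd (w s)) * e1" for s
    define m where "m s = (1 + \<alpha>1 s) * (a + snd (snd (w s)))" for s
    have wc: "continuous_on ?I w" by (rule sol_cont[OF w])
    have mc: "continuous_on ?I m" unfolding m_def using ca wc by (intro continuous_intros)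
    obtain Mm where Mm: "\<forall>s\<in>?I. \<bar>m s\<bar> \<le> Mm" using cont_bound[OF mc] by blast
    have solc: "sol (\<lambda>s y. m s * y) ?I cc" unfolding sol_def
    proof
      fix s assume s: "s \<in> ?I"
      have dw: "(w has_vector_derivative (1 + \<alpha>1 s) *\<^sub>R ?X (w s)) (at s within ?I)" using w s unfolding sol_def by blast
      have d1: "((\<lambda>s. fst (w s)) has_real_derivative (1 + \<alpha>1 s) * (a * fst (w s) + fst (w s) * snd (snd (w s)))) (at s within ?I)"
        using hvd_comps(1)[OF dw] by (simp add: langford_def split: prod.splits)
      have d2: "((\<lambda>s. fst (snd (w s))) has_real_derivative (1 + \<alpha>1 s) * (a * fst (snd (w s)) + fst (snd (w s)) * snd (snd (w s)))) (at s within ?I)"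
        using hvd_comps(2)[OF dw] by (simp add: langford_def split: prod.splits)
      have "(cc has_real_derivative m s * cc s) (at s within ?I)"
        unfolding cc_def[abs_def] by (rule derivative_eq_intros d1 d2 refl | simp add: m_def algebra_simps)+
      then show "(cc has_vector_derivative m s * cc s) (at s within ?I)"
        by (simp add: has_real_derivative_iff_has_vector_derivative)
    qed
    have sol0: "sol (\<lambda>s y. m s * y) ?I (\<lambda>_. 0)" unfolding sol_def
      by (auto intro: derivative_eq_intros)
    have cc0: "cc s = 0" if s: "s \<in> ?I" for s
    proof (rule uniq[where F="\<lambda>s y. m s * y" and L=Mm and a="-T" and b=T and tz=0 and Wa=cc and Wb="\<lambda>_. 0" and s=s])
      fix s' y1 y2 :: real assume s': "s' \<in> ?I"
      have "norm (m s' * y1 - m s' * y2) = \<bar>m s'\<bar> * \<bar>y1 - y2\<bar>" by (simp add: abs_mult[symmetric] algebra_simps)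
      also have "\<dots> \<le> Mm * \<bar>y1 - y2\<bar>" using Mm s' by (intro mult_right_mono) auto
      finally show "norm (m s' * y1 - m s' * y2) \<le> Mm * norm (y1 - y2)" by simp
    qed (use solc sol0 T0 s w0 in \<open>auto simp: cc_def e1_def e2_def\<close>)
    define n where "n = e1\<^sup>2 + e2\<^sup>2"
    have n0: "n \<noteq> 0"
    proof
      assume "n = 0"
      then have "e1 = 0" "e2 = 0" by (auto simp: n_def add_nonneg_eq_0_iff)
      then have "H0 = 0" by (simp add: H0_def Hf_def e1_def e2_def)
      then show False using False by simp
    qed
    define c where "c = H0 / n"
    define Ff where "Ff s d = \<alpha>2 s + c * ((e1 * cos d + e2 * sin d)\<^sup>2 * \<alpha>3 s + (e1 * cos d + e2 * sin d) * (- e1 * sin d + e2 * cos d) * \<alpha>4 s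
        + (- e1 * sin d + e2 * cos d)\<^sup>2 * \<alpha>5 s)" for s d
    have kkF: "kk s = Ff s (D s)" if s: "s \<in> ?I" for s
    proof -
      obtain W1 W2 W3 where Wd: "w s = (W1, W2, W3)" by (cases "w s") auto
      define \<delta> where "\<delta> = D s"
      define r1 where "r1 = e1 * cos \<delta> + e2 * sin \<delta>"
      define r2 where "r2 = - e1 * sin \<delta> + e2 * cos \<delta>"
      define lam where "lam = (W1 * e1 + W2 * e2) / n"
      have c0: "W1 * e2 = W2 * e1" using cc0[OF s] by (simp add: cc_def Wd)
      have l1: "W1 = lam * e1"
      proof -
        have "W1 * n = e1 * (W1 * e1 + W2 * e2)" unfolding n_def using c0 by (simp add: power2_eq_square algebra_simps)
        then show ?thesis using n0 by (simp add: lam_def field_simps)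
      qed
      have l2: "W2 = lam * e2"
      proof -
        have "W2 * n = e2 * (W1 * e1 + W2 * e2)" unfolding n_def using c0 by (simp add: power2_eq_square algebra_simps)
        then show ?thesis using n0 by (simp add: lam_def field_simps)
      qed
      have vs: "v s = rotm (- \<delta>) (w s)" unfolding w_def \<delta>_def by (simp add: rotm_inv)
      have V1: "fst (v s) = lam * r1" unfolding vs by (simp add: rotm_def Wd l1 l2 r1_def algebra_simps)
      have V2: "fst (snd (v s)) = lam * r2" unfolding vs by (simp add: rotm_def Wd l1 l2 r2_def algebra_simps)
      have rr: "r1\<^sup>2 + r2\<^sup>2 = n"
      proof -
        have "r1\<^sup>2 + r2\<^sup>2 = (e1\<^sup>2 + e2\<^sup>2) * ((sin \<delta>)\<^sup>2 + (cos \<delta>)\<^sup>2)" unfolding r1_def r2_def by algebra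
        then show ?thesis by (simp only: sin_cos_squared_add mult_1_right n_def)
      qed
      define G where "G = 4*a * snd (snd (v s)) + (fst (v s))\<^sup>2 + (fst (snd (v s)))\<^sup>2 + 2 * (snd (snd (v s)))\<^sup>2"
      have "H0 = ((fst (v s))\<^sup>2 + (fst (snd (v s)))\<^sup>2) * G" using Hc[OF s] by (simp add: Hf_def G_def)
      also have "\<dots> = lam\<^sup>2 * (r1\<^sup>2 + r2\<^sup>2) * G" by (simp add: V1 V2 power_mult_distrib algebra_simps)
      finally have "H0 = lam\<^sup>2 * n * G" using rr by simp
      then have Gl: "G * lam\<^sup>2 = c" using n0 by (simp add: c_def field_simps)
      have "kk s = \<alpha>2 s + G * ((lam * r1)\<^sup>2 * \<alpha>3 s + (lam * r1) * (lam * r2) * \<alpha>4 s + (lam * r2)\<^sup>2 * \<alpha>5 s)"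
        using kkd[OF s] by (simp add: G_def V1 V2)
      also have "\<dots> = \<alpha>2 s + (G * lam\<^sup>2) * (r1\<^sup>2 * \<alpha>3 s + r1 * r2 * \<alpha>4 s + r2\<^sup>2 * \<alpha>5 s)"
        by (simp add: power2_eq_square algebra_simps)
      also have "\<dots> = Ff s (D s)" unfolding Gl by (simp add: Ff_def r1_def r2_def \<delta>_def)
      finally show ?thesis .
    qed
    have solD: "sol Ff ?I D" unfolding sol_def
    proof
      fix s assume s: "s \<in> ?I"
      show "(D has_vector_derivative Ff s (D s)) (at s within ?I)"
        using dD[OF s] kkF[OF s] by (simp add: has_real_derivative_iff_has_vector_derivative)
    qed
    have Fodd: "- Ff (- s) d = Ff s d" for s d
      by (simp add: Ff_def odd_cont_odd[OF a2] odd_cont_odd[OF a3] odd_cont_odd[OF a4] odd_cont_odd[OF a5] algebra_simps)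
    have solE: "sol Ff ?I (\<lambda>s. D (- s))"
    proof -
      have "sol (\<lambda>s x. - Ff (- s) x) {- T..- (- T)} (\<lambda>s. D (- s))" by (rule sol_reflect[OF solD])
      then show ?thesis by (simp add: Fodd)
    qed
    obtain M3 where M3: "\<forall>s\<in>?I. \<bar>\<alpha>3 s\<bar> \<le> M3" using cont_bound[OF ca(3)] by blast
    obtain M4 where M4: "\<forall>s\<in>?I. \<bar>\<alpha>4 s\<bar> \<le> M4" using cont_bound[OF ca(4)] by blast
    obtain M5 where M5: "\<forall>s\<in>?I. \<bar>\<alpha>5 s\<bar> \<le> M5" using cont_bound[OF ca(5)] by blast
    define M where "M = max M3 (max M4 M5)"
    have "D (- x) = D x"
    proof (rule uniq[where F=Ff and L="\<bar>c\<bar> * (6 * M * (\<bar>e1\<bar> + \<bar>e2\<bar>)\<^sup>2)" and a="-T" and b=T and tz=0 and Wa="\<lambda>s. D (- s)" and Wb=D and s=x])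
      fix s' y1 y2 :: real assume s': "s' \<in> ?I"
      have "\<bar>\<alpha>3 s'\<bar> \<le> M3" "\<bar>\<alpha>4 s'\<bar> \<le> M4" "\<bar>\<alpha>5 s'\<bar> \<le> M5" using M3 M4 M5 s' by blast+
      then have A: "\<bar>\<alpha>3 s'\<bar> \<le> M" "\<bar>\<alpha>4 s'\<bar> \<le> M" "\<bar>\<alpha>5 s'\<bar> \<le> M" by (simp_all add: M_def le_max_iff_disj)
      have "\<bar>Ff s' y1 - Ff s' y2\<bar> \<le> \<bar>c\<bar> * (6 * M * (\<bar>e1\<bar> + \<bar>e2\<bar>)\<^sup>2) * \<bar>y1 - y2\<bar>"
        unfolding Ff_def add_diff_cancel_left by (rule F_lip[OF A])
      then show "norm (Ff s' y1 - Ff s' y2) \<le> \<bar>c\<bar> * (6 * M * (\<bar>e1\<bar> + \<bar>e2\<bar>)\<^sup>2) * norm (y1 - y2)" by simp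
    qed (use solD solE T0 x in auto)
    then show ?thesis by (simp add: D_def)
  qed
qed

lemma case4:
  assumes a1: "odd_cont \<alpha>1" and a2: "odd_cont \<alpha>2" and a3: "odd_cont \<alpha>3" and a4: "odd_cont \<alpha>4" and a5: "odd_cont \<alpha>5"
  shows "same_mrf (langford a 0 0 a (-2*a))
      (\<lambda>t (x, y, z). ((a*x + x*z) * (1 + \<alpha>1 t) + y*\<alpha>2 t
                          + y*(4*a*z + x^2 + y^2 + 2*z^2)*(x^2*\<alpha>3 t + x*y*\<alpha>4 t + y^2*\<alpha>5 t),
                       (a*y + y*z) * (1 + \<alpha>1 t) - x*\<alpha>2 t
                          - x*(4*a*z + x^2 + y^2 + 2*z^2)*(x^2*\<alpha>3 t + x*y*\<alpha>4 t + y^2*\<alpha>5 t),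
                       -(2*a*z + x^2 + y^2 + z^2) * (1 + \<alpha>1 t)))"
proof (rule same_mrf_I)
  fix T t u v assume t: "t \<in> {-T..T}" and u: "sol (langford a 0 0 a (-2*a)) {-T..T} u"
    and v: "sol (\<lambda>t (x, y, z). ((a*x + x*z) * (1 + \<alpha>1 t) + y*\<alpha>2 t
                          + y*(4*a*z + x^2 + y^2 + 2*z^2)*(x^2*\<alpha>3 t + x*y*\<alpha>4 t + y^2*\<alpha>5 t),
                       (a*y + y*z) * (1 + \<alpha>1 t) - x*\<alpha>2 t
                          - x*(4*a*z + x^2 + y^2 + 2*z^2)*(x^2*\<alpha>3 t + x*y*\<alpha>4 t + y^2*\<alpha>5 t),
                       -(2*a*z + x^2 + y^2 + z^2) * (1 + \<alpha>1 t))) {-T..T} v"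
    and eq: "u t = v t"
  let ?I = "{-T..T}"
  let ?X = "langford a 0 (-0) a (-2*a) 0"
  have ca: "continuous_on ?I \<alpha>1" "continuous_on ?I \<alpha>2" "continuous_on ?I \<alpha>3" "continuous_on ?I \<alpha>4" "continuous_on ?I \<alpha>5"
    using odd_cont_on a1 a2 a3 a4 a5 by blast+
  define kk where "kk s = \<alpha>2 s + (4*a * snd (snd (v s)) + (fst (v s))\<^sup>2 + (fst (snd (v s)))\<^sup>2 + 2 * (snd (snd (v s)))\<^sup>2)
          * ((fst (v s))\<^sup>2 * \<alpha>3 s + fst (v s) * fst (snd (v s)) * \<alpha>4 s + (fst (snd (v s)))\<^sup>2 * \<alpha>5 s)" for s
  have vc: "continuous_on ?I v" by (rule sol_cont[OF v])
  have kc: "continuous_on ?I kk" unfolding kk_def using ca vc by (intro continuous_intros)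
  have v': "sol (\<lambda>s p. (1 + \<alpha>1 s) *\<^sub>R ?X p + kk s *\<^sub>R Rf p) ?I v"
    by (rule sol_cong[OF v]) (auto simp: kk_def langford_def Rf_def algebra_simps split: prod.splits)
  have ki: "integral {-T..t} kk = integral {-T..-t} kk"
    by (rule D_even[OF a1 a2 a3 a4 a5 v' _ kc t]) (simp add: kk_def)
  show "u (-t) = v (-t)"
  proof (rule rot_case[where g="\<lambda>s. 1 + \<alpha>1 s" and kk=kk and T=T and b=0])
    show "sol (\<lambda>s p. (1 + \<alpha>1 s) *\<^sub>R ?X p + kk s *\<^sub>R Rf p) {-T..T} v" by (rule v')
    show "sol (\<lambda>s p. ?X p) {-T..T} u" by (rule sol_cong[OF u]) (simp add: langford_def)
    show "continuous_on {-T..T} (\<lambda>s. 1 + \<alpha>1 s)" using ca by (intro continuous_intros)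
    show "integral {-T..-t} (\<lambda>s. 1 + \<alpha>1 s) - integral {-T..t} (\<lambda>s. 1 + \<alpha>1 s) = -t - t"
      by (rule gi_odd[OF ca(1) odd_cont_odd[OF a1] t])
  qed (use kc t eq ki in auto)
qed

theorem theorem2:
  fixes a b c d e :: real and \<alpha>1 \<alpha>2 \<alpha>3 \<alpha>4 \<alpha>5 :: "real \<Rightarrow> real"
  assumes "odd_cont \<alpha>1" "odd_cont \<alpha>2" "odd_cont \<alpha>3" "odd_cont \<alpha>4" "odd_cont \<alpha>5"
  shows
   "(same_mrf (langford a b c d e)
      (\<lambda>t (x, y, z). ((a*x + b*y + x*z) * (1 + \<alpha>1 t),
                       (c*x + d*y + y*z) * (1 + \<alpha>1 t),
                       (e*z - (x^2 + y^2 + z^2)) * (1 + \<alpha>1 t))))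
   \<and> (c = -b \<and> d = a \<longrightarrow> same_mrf (langford a b c d e)
      (\<lambda>t (x, y, z). ((a*x + b*y + x*z) * (1 + \<alpha>1 t) + x*(a + z)*\<alpha>2 t + y*\<alpha>3 t,
                       (-b*x + a*y + y*z) * (1 + \<alpha>1 t) + y*(a + z)*\<alpha>2 t - x*\<alpha>3 t,
                       (e*z - x^2 - y^2 - z^2) * (1 + \<alpha>1 t + \<alpha>2 t))))
   \<and> (c = -b \<and> d = a \<and> e = -2*a \<longrightarrow> same_mrf (langford a b c d e)
      (\<lambda>t (x, y, z). ((a*x + b*y + x*z) * (1 + \<alpha>1 t) + x*(a + z)*\<alpha>2 t + y*\<alpha>3 t
                          - y*(x^2 + y^2)*(4*a*z + x^2 + y^2 + 2*z^2)*\<alpha>4 t,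
                       (-b*x + a*y + y*z) * (1 + \<alpha>1 t) + y*(a + z)*\<alpha>2 t - x*\<alpha>3 t
                          + x*(x^2 + y^2)*(4*a*z + x^2 + y^2 + 2*z^2)*\<alpha>4 t,
                       -(2*a*z + x^2 + y^2 + z^2) * (1 + \<alpha>1 t + \<alpha>2 t))))
   \<and> (c = 0 \<and> b = 0 \<and> d = a \<and> e = -2*a \<longrightarrow> same_mrf (langford a b c d e)
      (\<lambda>t (x, y, z). ((a*x + x*z) * (1 + \<alpha>1 t) + y*\<alpha>2 t
                          + y*(4*a*z + x^2 + y^2 + 2*z^2)*(x^2*\<alpha>3 t + x*y*\<alpha>4 t + y^2*\<alpha>5 t),
                       (a*y + y*z) * (1 + \<alpha>1 t) - x*\<alpha>2 t
                          - x*(4*a*z + x^2 + y^2 + 2*z^2)*(x^2*\<alpha>3 t + x*y*\<alpha>4 t + y^2*\<alpha>5 t),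
                       -(2*a*z + x^2 + y^2 + z^2) * (1 + \<alpha>1 t))))"
proof (intro conjI impI)
  show "same_mrf (langford a b c d e)
      (\<lambda>t (x, y, z). ((a*x + b*y + x*z) * (1 + \<alpha>1 t),
                       (c*x + d*y + y*z) * (1 + \<alpha>1 t),
                       (e*z - (x^2 + y^2 + z^2)) * (1 + \<alpha>1 t)))"
    by (rule case1[OF assms(1)])
next
  assume h: "c = -b \<and> d = a"
  then have h1: "c = -b" and h2: "d = a" by auto
  show "same_mrf (langford a b c d e)
      (\<lambda>t (x, y, z). ((a*x + b*y + x*z) * (1 + \<alpha>1 t) + x*(a + z)*\<alpha>2 t + y*\<alpha>3 t,
                       (-b*x + a*y + y*z) * (1 + \<alpha>1 t) + y*(a + z)*\<alpha>2 t - x*\<alpha>3 t,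
                       (e*z - x^2 - y^2 - z^2) * (1 + \<alpha>1 t + \<alpha>2 t)))"
    unfolding h1 h2 by (rule case2[OF assms(1) assms(2) assms(3)])
next
  assume h: "c = -b \<and> d = a \<and> e = -2*a"
  then have h1: "c = -b" and h2: "d = a" and h3: "e = -2*a" by auto
  show "same_mrf (langford a b c d e)
      (\<lambda>t (x, y, z). ((a*x + b*y + x*z) * (1 + \<alpha>1 t) + x*(a + z)*\<alpha>2 t + y*\<alpha>3 t
                          - y*(x^2 + y^2)*(4*a*z + x^2 + y^2 + 2*z^2)*\<alpha>4 t,
                       (-b*x + a*y + y*z) * (1 + \<alpha>1 t) + y*(a + z)*\<alpha>2 t - x*\<alpha>3 t
                          + x*(x^2 + y^2)*(4*a*z + x^2 + y^2 + 2*z^2)*\<alpha>4 t,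
                       -(2*a*z + x^2 + y^2 + z^2) * (1 + \<alpha>1 t + \<alpha>2 t)))"
    unfolding h1 h2 h3 by (rule case3[OF assms(1) assms(2) assms(3) assms(4)])
next
  assume h: "c = 0 \<and> b = 0 \<and> d = a \<and> e = -2*a"
  then have h1: "c = 0" and h0: "b = 0" and h2: "d = a" and h3: "e = -2*a" by auto
  show "same_mrf (langford a b c d e)
      (\<lambda>t (x, y, z). ((a*x + x*z) * (1 + \<alpha>1 t) + y*\<alpha>2 t
                          + y*(4*a*z + x^2 + y^2 + 2*z^2)*(x^2*\<alpha>3 t + x*y*\<alpha>4 t + y^2*\<alpha>5 t),
                       (a*y + y*z) * (1 + \<alpha>1 t) - x*\<alpha>2 t
                          - x*(4*a*z + x^2 + y^2 + 2*z^2)*(x^2*\<alpha>3 t + x*y*\<alpha>4 t + y^2*\<alpha>5 t),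
                       -(2*a*z + x^2 + y^2 + z^2) * (1 + \<alpha>1 t)))"
    unfolding h1 h0 h2 h3 by (rule case4[OF assms(1) assms(2) assms(3) assms(4) assms(5)])
qed

end
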